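(* Let $\mathbb{K}$ be an infinite field of characteristic $p>2$. In the algebra $R_p=\mathbb{K}\langle Y\cup Z\rangle/I_p$, the image of every $Y$-proper polynomial is a linear combination of the images of polynomials $g=h(y_{i_1},\dots,y_{i_{2m+n}},z_{j_1},\dots,z_{j_{n+2r}})\,z_{k_1}\cdots z_{k_q}$ with $i_1<\dots<i_{2m+n}$, $j_1\le\dots\le j_{n+2r}$, $k_1<\dots<k_q$, and such that the degree of $h$ in each variable $z\in Z$ is less than $p$.
   Context: $\mathbb{K}\langle Y\cup Z\rangle$ is the free associative algebra on disjoint countable sets $Y=\{y_1,\dots\}$ (degree $0$) and $Z=\{z_1,\dots\}$ (degree $1$). Notation: $[a,b]=ab-ba$, $[a_1,\dots,a_n]=[[a_1,\dots,a_{n-1}],a_n]$, $a\circ b=ab+ba$. A polynomial is $Y$-proper if it lies in the subalgebra generated by $Z$ and all commutators $[x_1,\dots,x_s]$, $s\ge2$, of variables $x_i\in Y\cup Z$. A $T_2$-ideal is an ideal stable under all graded endomorphisms (sending $y_i$ to degree-$0$ and $z_i$ to degree-$1$ polynomials). $I_p$ is the $T_2$-ideal generated by: (1) $[y_1,y_2,y_3]$, $[y_1,y_2,z_3]$; (2) $[y_1,z_2,y_3]$; (3) $[y_1,z_2]\circ z_3$; (4) $[z_1\circ z_2,z_3]$; (5) $(z_1\circ z_2)(z_3\circ z_4)-(z_1\circ z_3)(z_2\circ z_4)$; (6) $[x_1,y_2][y_3,x_4]+[x_1,y_3][y_2,x_4]$ for all choices $x_1\in\{y_1,z_1\}$, $x_4\in\{y_4,z_4\}$;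 (7) $[y_1,z_2](z_3\circ z_4)-[y_1,z_3](z_2\circ z_4)$; (8) $[y_1,z_1]\cdots[y_{2k-2},z_1](z_2\circ z_1)z_1^{2n}$ and (9) $[y_1,z_1]\cdots[y_{2k-1},z_1]z_1^{2n}$, for all integers $k\ge1$, $n\ge0$ with $2n+2k-1=p$. For nonnegative integers $m,n,r$ and indices $i_t,j_l$, $h(y_{i_1},\dots,y_{i_{2m+n}},z_{j_1},\dots,z_{j_{n+2r}})=[y_{i_1},y_{i_2}]\cdots[y_{i_{2m-1}},y_{i_{2m}}]\cdot[y_{i_{2m+1}},z_{j_1}]\cdots[y_{i_{2m+n}},z_{j_n}]\cdot(z_{j_{n+1}}\circ z_{j_{n+2}})\cdots(z_{j_{n+2r-1}}\circ z_{j_{n+2r}})$. *)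

theory Defs
  imports Main "HOL-Library.Poly_Mapping"
begin

text \<open>Variables: Y i has Z2-degree 0, Z i has Z2-degree 1.\<close>
datatype var = Yv nat | Zv nat

datatype word = Word "var list"

fun letters :: "word \<Rightarrow> var list" where "letters (Word w) = w"

instantiation word :: monoid_add
begin
definition zero_word :: word where "zero_word = Word []"
fun plus_word :: "word \<Rightarrow> word \<Rightarrow> word" where
  "plus_word (Word a) (Word b) = Word (a @ b)"
instance
proof
  fix a b c :: word
  show "a + b + c = a + (b + c)" by (cases a; cases b; cases c) simp_all
  show "0 + a = a" by (cases a) (simp add: zero_word_def)
  show "a + 0 = a" by (cases a) (simp add: zero_word_def)
qed
end

text \<open>The free associative (unital) algebra over 'k: finitely supported
  functions from words to 'k, with convolution product (a ring_1).\<close>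
type_synonym 'k fa = "word \<Rightarrow>\<^sub>0 'k"

definition var :: "var \<Rightarrow> 'k::ring_1 fa" where
  "var v = Poly_Mapping.single (Word [v]) 1"

abbreviation yv :: "nat \<Rightarrow> 'k::ring_1 fa" where "yv i \<equiv> var (Yv i)"
abbreviation zv :: "nat \<Rightarrow> 'k::ring_1 fa" where "zv i \<equiv> var (Zv i)"

definition const :: "'k::ring_1 \<Rightarrow> 'k fa" where
  "const c = Poly_Mapping.single (Word []) c"

definition comm :: "'a::ring \<Rightarrow> 'a \<Rightarrow> 'a" where "comm a b = a * b - b * a"
definition jord :: "'a::ring \<Rightarrow> 'a \<Rightarrow> 'a" where "jord a b = a * b + b * a"

definition lcomm :: "'a::ring \<Rightarrow> 'a list \<Rightarrow> 'a" where
  "lcomm a bs = foldl comm a bs"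

definition zcount :: "var list \<Rightarrow> nat" where
  "zcount w = length (filter (\<lambda>v. case v of Zv _ \<Rightarrow> True | Yv _ \<Rightarrow> False) w)"

definition homog :: "nat \<Rightarrow> 'k::ring_1 fa \<Rightarrow> bool" where
  "homog d f \<longleftrightarrow> (\<forall>w \<in> Poly_Mapping.keys f. zcount (letters w) mod 2 = d)"

definition subst :: "(var \<Rightarrow> 'k::ring_1 fa) \<Rightarrow> 'k fa \<Rightarrow> 'k fa" where
  "subst \<sigma> f = (\<Sum>w \<in> Poly_Mapping.keys f. const (Poly_Mapping.lookup f w) * prod_list (map \<sigma> (letters w)))"

definition graded_subst :: "(var \<Rightarrow> 'k::ring_1 fa) \<Rightarrow> bool" where
  "graded_subst \<sigma> \<longleftrightarrow> (\<forall>i. homog 0 (\<sigma> (Yv i)) \<and> homog 1 (\<sigma> (Zv i)))"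

inductive_set T2_ideal :: "'k::ring_1 fa set \<Rightarrow> 'k fa set" for S where
  gen: "f \<in> S \<Longrightarrow> f \<in> T2_ideal S"
| zero: "0 \<in> T2_ideal S"
| add: "f \<in> T2_ideal S \<Longrightarrow> g \<in> T2_ideal S \<Longrightarrow> f + g \<in> T2_ideal S"
| lmult: "f \<in> T2_ideal S \<Longrightarrow> a * f \<in> T2_ideal S"
| rmult: "f \<in> T2_ideal S \<Longrightarrow> f * a \<in> T2_ideal S"
| endo: "f \<in> T2_ideal S \<Longrightarrow> graded_subst \<sigma> \<Longrightarrow> subst \<sigma> f \<in> T2_ideal S"

definition Ip_gens :: "nat \<Rightarrow> 'k::ring_1 fa set" where
  "Ip_gens p =
     {lcomm (yv 1) [yv 2, yv 3], lcomm (yv 1) [yv 2, zv 3]}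
   \<union> {lcomm (yv 1) [zv 2, yv 3]}
   \<union> {jord (comm (yv 1) (zv 2)) (zv 3)}
   \<union> {comm (jord (zv 1) (zv 2)) (zv 3)}
   \<union> {jord (zv 1) (zv 2) * jord (zv 3) (zv 4) - jord (zv 1) (zv 3) * jord (zv 2) (zv 4)}
   \<union> {comm x1 (yv 2) * comm (yv 3) x4 + comm x1 (yv 3) * comm (yv 2) x4 | x1 x4.
        x1 \<in> {yv 1, zv 1} \<and> x4 \<in> {yv 4, zv 4}}
   \<union> {comm (yv 1) (zv 2) * jord (zv 3) (zv 4) - comm (yv 1) (zv 3) * jord (zv 2) (zv 4)}
   \<union> {prod_list (map (\<lambda>t. comm (yv (t+1)) (zv 1)) [0..<2*k-2]) * jord (zv 2) (zv 1) * zv 1 ^ (2*n)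
        | k n. k \<ge> 1 \<and> 2*n + 2*k - 1 = p}
   \<union> {prod_list (map (\<lambda>t. comm (yv (t+1)) (zv 1)) [0..<2*k-1]) * zv 1 ^ (2*n)
        | k n. k \<ge> 1 \<and> 2*n + 2*k - 1 = p}"

definition Ip :: "nat \<Rightarrow> 'k::ring_1 fa set" where
  "Ip p = T2_ideal (Ip_gens p)"

text \<open>The (unital) subalgebra generated by all z_i and all commutators
  [x_1,...,x_s], s \<ge> 2, of variables.\<close>
inductive_set Y_proper :: "'k::ring_1 fa set" where
  const: "const c \<in> Y_proper"
| zvar: "zv i \<in> Y_proper"
| commutator: "length xs \<ge> 1 \<Longrightarrow> lcomm (var x) (map var xs) \<in> Y_proper"
| add: "f \<in> Y_proper \<Longrightarrow> g \<in> Y_proper \<Longrightarrow> f + g \<in> Y_proper"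
| mult: "f \<in> Y_proper \<Longrightarrow> g \<in> Y_proper \<Longrightarrow> f * g \<in> Y_proper"

text \<open>h(y_{i_1},...,y_{i_{2m+n}}, z_{j_1},...,z_{j_{n+2r}}), with is = [i_1,...],
  js = [j_1,...] (0-based list positions).\<close>
definition hpoly :: "nat \<Rightarrow> nat \<Rightarrow> nat \<Rightarrow> nat list \<Rightarrow> nat list \<Rightarrow> 'k::ring_1 fa" where
  "hpoly m n r is js =
     prod_list (map (\<lambda>t. comm (yv (is ! (2*t))) (yv (is ! (2*t+1)))) [0..<m])
   * prod_list (map (\<lambda>t. comm (yv (is ! (2*m+t))) (zv (js ! t))) [0..<n])
   * prod_list (map (\<lambda>t. jord (zv (js ! (n+2*t))) (zv (js ! (n+2*t+1)))) [0..<r])"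

definition deg_in :: "var \<Rightarrow> 'k::ring_1 fa \<Rightarrow> nat" where
  "deg_in v f = Max (insert 0 ((\<lambda>w. count_list (letters w) v) ` Poly_Mapping.keys f))"

definition g_set :: "nat \<Rightarrow> 'k::ring_1 fa set" where
  "g_set p = {hpoly m n r is js * prod_list (map zv ks) | m n r is js ks.
      length is = 2*m + n \<and> length js = n + 2*r \<and>
      sorted_wrt (<) is \<and> sorted js \<and> sorted_wrt (<) ks \<and>
      (\<forall>c. deg_in (Zv c) (hpoly m n r is js :: 'k fa) < p)}"

end

theory Submission
  imports Defs "HOL-Computational_Algebra.Primes" "HOL-Computational_Algebra.Euclidean_Algorithm"
begin


lemma letters_plus[simp]: "letters (a + b) = letters a @ letters b"
  by (cases a; cases b) simp
lemma letters_zero[simp]: "letters 0 = []" by (simp add: zero_word_def)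
lemma Word_letters[simp]: "Word (letters w) = w" by (cases w) simp

lemma const_0[simp]: "const 0 = 0" by (simp add: const_def)
lemma const_1[simp]: "const 1 = 1"
  by (simp add: const_def zero_word_def[symmetric])
lemma const_add: "const (a+b) = const a + const b" by (simp add: const_def single_add)
lemma const_mult: "const (a*b) = const a * const b"
  by (simp add: const_def mult_single zero_word_def)
lemma const_uminus: "const (-a) = - const a" by (simp add: const_def single_uminus)
lemma const_diff: "const (a-b) = const a - const b" by (simp add: const_def single_diff)
lemma const_of_nat: "const (of_nat n) = of_nat n"
  by (simp add: const_def zero_word_def[symmetric])

lemma update_eq_add_single:
  "a \<notin> Poly_Mapping.keys f \<Longrightarrow> Poly_Mapping.update a b f = f + Poly_Mapping.single a b"
  by (rule poly_mapping_eqI) (auto simp: lookup_update lookup_add lookup_single in_keys_iff when_def)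

lemma poly_induct[case_names zero add]:
  assumes "P 0" "\<And>f w c. P f \<Longrightarrow> P (f + Poly_Mapping.single w c)"
  shows "P x"
proof (induction x rule: update_induct)
  case const then show ?case using assms(1) .
next
  case (update f a b) then show ?case using assms(2) update_eq_add_single by metis
qed

lemma const_comm: "const c * x = x * (const c :: 'k::comm_ring_1 fa)"
proof (induction x rule: poly_induct)
  case zero then show ?case by simp
next
  case (add f w d)
  have "const c * Poly_Mapping.single w d = Poly_Mapping.single w d * const c"
    by (cases w) (simp add: const_def mult_single mult.commute)
  then show ?case using add by (simp add: algebra_simps)
qed

lemma prod_var: "prod_list (map var vs) = (Poly_Mapping.single (Word vs) 1 :: 'k::ring_1 fa)"
  by (induction vs) (auto simp: var_def mult_single zero_word_def[symmetric])

lemma subst_eq_sum: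
  assumes "finite S" "Poly_Mapping.keys f \<subseteq> S"
  shows "subst \<sigma> f = (\<Sum>w\<in>S. const (Poly_Mapping.lookup f w) * prod_list (map \<sigma> (letters w)))"
  unfolding subst_def
  by (rule sum.mono_neutral_left) (use assms in \<open>auto simp: in_keys_iff\<close>)

lemma subst_add: "subst \<sigma> (f + g) = subst \<sigma> f + subst \<sigma> (g :: 'k::ring_1 fa)"
proof -
  let ?S = "Poly_Mapping.keys f \<union> Poly_Mapping.keys g \<union> Poly_Mapping.keys (f+g)"
  have "subst \<sigma> (f+g) = (\<Sum>w\<in>?S. const (Poly_Mapping.lookup (f+g) w) * prod_list (map \<sigma> (letters w)))"
    by (rule subst_eq_sum) auto
  also have "\<dots> = (\<Sum>w\<in>?S. const (Poly_Mapping.lookup f w) * prod_list (map \<sigma> (letters w)))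
     + (\<Sum>w\<in>?S. const (Poly_Mapping.lookup g w) * prod_list (map \<sigma> (letters w)))"
    by (simp add: lookup_add const_add distrib_right sum.distrib)
  also have "\<dots> = subst \<sigma> f + subst \<sigma> g"
  proof -
    have "subst \<sigma> f = (\<Sum>w\<in>?S. const (Poly_Mapping.lookup f w) * prod_list (map \<sigma> (letters w)))"
      by (rule subst_eq_sum) auto
    moreover have "subst \<sigma> g = (\<Sum>w\<in>?S. const (Poly_Mapping.lookup g w) * prod_list (map \<sigma> (letters w)))"
      by (rule subst_eq_sum) auto
    ultimately show ?thesis by simp
  qed
  finally show ?thesis .
qed

lemma subst_zero[simp]: "subst \<sigma> 0 = 0" by (simp add: subst_def)

lemma subst_single: "subst \<sigma> (Poly_Mapping.single w c) = const c * prod_list (map \<sigma> (letters w))"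
  by (subst subst_eq_sum[of "{w}"]) auto

lemma subst_mult: "subst \<sigma> (f * g) = subst \<sigma> f * subst \<sigma> (g :: 'k::comm_ring_1 fa)"
proof (induction f rule: poly_induct)
  case zero then show ?case by simp
next
  case (add f w c)
  have "subst \<sigma> (Poly_Mapping.single w c * g) = subst \<sigma> (Poly_Mapping.single w c) * subst \<sigma> g"
  proof (induction g rule: poly_induct)
    case zero then show ?case by simp
  next
    case (add g u d)
    have "subst \<sigma> (Poly_Mapping.single w c * Poly_Mapping.single u d)
       = const c * prod_list (map \<sigma> (letters w)) * (const d * prod_list (map \<sigma> (letters u)))"
    proof -
      have "const d * prod_list (map \<sigma> (letters w)) = prod_list (map \<sigma> (letters w)) * const d"
        by (rule const_comm)
      then show ?thesis by (simp add: mult_single subst_single const_mult) (metis mult.assoc)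
    qed
    then show ?case using add by (simp add: distrib_left subst_add subst_single)
  qed
  then show ?case using add by (simp add: distrib_right subst_add)
qed

lemma subst_uminus: "subst \<sigma> (- f) = - subst \<sigma> (f :: 'k::ring_1 fa)"
  using subst_add[of \<sigma> f "-f"] by (simp add: eq_neg_iff_add_eq_0 add.commute)
lemma subst_diff: "subst \<sigma> (f - g) = subst \<sigma> f - subst \<sigma> (g :: 'k::ring_1 fa)"
  using subst_add[of \<sigma> f "-g"] by (simp add: subst_uminus)
lemma subst_const[simp]: "subst \<sigma> (const c) = const c"
  by (simp add: const_def subst_single)
lemma subst_one[simp]: "subst \<sigma> (1 :: 'k::ring_1 fa) = 1"
  using subst_const[of \<sigma> "1::'k"] by simp
lemma subst_var[simp]: "subst \<sigma> (var v) = \<sigma> v"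
  by (simp add: var_def subst_single)
lemma subst_prod_list: "subst \<sigma> (prod_list xs) = prod_list (map (subst \<sigma>) (xs :: 'k::comm_ring_1 fa list))"
  by (induction xs) (auto simp: subst_mult)
lemma subst_power: "subst \<sigma> (x ^ n) = subst \<sigma> (x :: 'k::comm_ring_1 fa) ^ n"
  by (induction n) (auto simp: subst_mult)
lemma subst_comm[simp]: "subst \<sigma> (comm a b) = comm (subst \<sigma> a) (subst \<sigma> (b :: 'k::comm_ring_1 fa))"
  by (simp add: comm_def subst_diff subst_mult)
lemma subst_jord[simp]: "subst \<sigma> (jord a b) = jord (subst \<sigma> a) (subst \<sigma> (b :: 'k::comm_ring_1 fa))"
  by (simp add: jord_def subst_add subst_mult)
lemma subst_id: "subst var f = (f :: 'k::comm_ring_1 fa)"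
proof (induction f rule: poly_induct)
  case (add f w c)
  have "const c * Poly_Mapping.single w 1 = Poly_Mapping.single w c"
    by (cases w) (simp add: const_def mult_single)
  then show ?case using add by (simp add: subst_add subst_single prod_var)
qed simp


lemma Ip_gen: "g \<in> Ip_gens p \<Longrightarrow> g \<in> Ip p" by (simp add: Ip_def T2_ideal.gen)
lemma Ip_zero[simp]: "0 \<in> Ip p" by (simp add: Ip_def T2_ideal.zero)
lemma Ip_add: "a \<in> Ip p \<Longrightarrow> b \<in> Ip p \<Longrightarrow> a + b \<in> Ip p" by (simp add: Ip_def T2_ideal.add)
lemma Ip_lmult: "a \<in> Ip p \<Longrightarrow> x * a \<in> Ip p" by (simp add: Ip_def T2_ideal.lmult)
lemma Ip_rmult: "a \<in> Ip p \<Longrightarrow> a * x \<in> Ip p" by (simp add: Ip_def T2_ideal.rmult)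
lemma Ip_endo: "a \<in> Ip p \<Longrightarrow> graded_subst \<sigma> \<Longrightarrow> subst \<sigma> a \<in> Ip p"
  by (simp add: Ip_def T2_ideal.endo)
lemma Ip_uminus: "a \<in> Ip p \<Longrightarrow> - a \<in> Ip p"
  using Ip_lmult[of a p "-1"] by simp
lemma Ip_diff: "a \<in> Ip p \<Longrightarrow> b \<in> Ip p \<Longrightarrow> a - b \<in> Ip p"
  using Ip_add[of a p "-b"] Ip_uminus[of b p] by simp
lemma Ip_mid: "a \<in> Ip p \<Longrightarrow> x * a * y \<in> Ip p" by (intro Ip_lmult Ip_rmult)
lemma Ip_sum: "(\<And>x. x \<in> S \<Longrightarrow> f x \<in> Ip p) \<Longrightarrow> sum f S \<in> Ip p"
  by (induction S rule: infinite_finite_induct) (auto intro: Ip_add)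
lemma Ip_uminus_iff: "- a \<in> Ip p \<longleftrightarrow> a \<in> Ip p"
  using Ip_uminus[of a p] Ip_uminus[of "-a" p] by auto

definition cg :: "nat \<Rightarrow> 'k::field fa \<Rightarrow> 'k fa \<Rightarrow> bool" where
  "cg p a b \<longleftrightarrow> a - b \<in> Ip p"

lemma cg_refl[simp]: "cg p a a" by (simp add: cg_def)
lemma cg_sym: "cg p a b \<Longrightarrow> cg p b a"
  unfolding cg_def using Ip_uminus by fastforce
lemma cg_trans[trans]: "cg p a b \<Longrightarrow> cg p b c \<Longrightarrow> cg p a c"
  unfolding cg_def using Ip_add by fastforce
lemma cg_eq_trans[trans]: "a = b \<Longrightarrow> cg p b c \<Longrightarrow> cg p a c" by simp
lemma cg_trans_eq[trans]: "cg p a b \<Longrightarrow> b = c \<Longrightarrow> cg p a c" by simp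
lemma cg_add: "cg p a b \<Longrightarrow> cg p c d \<Longrightarrow> cg p (a + c) (b + d)"
  unfolding cg_def using Ip_add by (fastforce simp: algebra_simps)
lemma cg_diff: "cg p a b \<Longrightarrow> cg p c d \<Longrightarrow> cg p (a - c) (b - d)"
  unfolding cg_def using Ip_diff by (fastforce simp: algebra_simps)
lemma cg_uminus: "cg p a b \<Longrightarrow> cg p (- a) (- b)"
  unfolding cg_def using Ip_uminus by (fastforce simp: algebra_simps)
lemma cg_lmult: "cg p a b \<Longrightarrow> cg p (x * a) (x * b)"
  unfolding cg_def using Ip_lmult by (fastforce simp: algebra_simps)
lemma cg_rmult: "cg p a b \<Longrightarrow> cg p (a * x) (b * x)"
  unfolding cg_def using Ip_rmult by (fastforce simp: algebra_simps)
lemma cg_mult: "cg p a b \<Longrightarrow> cg p c d \<Longrightarrow> cg p (a * c) (b * d)"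
  using cg_trans cg_lmult cg_rmult by blast
lemma cg_0I: "a \<in> Ip p \<Longrightarrow> cg p a 0" by (simp add: cg_def)
lemma cg_0D: "cg p a 0 \<Longrightarrow> a \<in> Ip p" by (simp add: cg_def)
lemma cg_Ip: "cg p a b \<Longrightarrow> b \<in> Ip p \<Longrightarrow> a \<in> Ip p"
  unfolding cg_def using Ip_add by fastforce

section \<open>Renaming substitutions\<close>

definition ren :: "(nat \<Rightarrow> nat) \<Rightarrow> (nat \<Rightarrow> nat) \<Rightarrow> var \<Rightarrow> 'k::field fa" where
  "ren fy fz v = (case v of Yv i \<Rightarrow> yv (fy i) | Zv i \<Rightarrow> zv (fz i))"

lemma keys_var: "Poly_Mapping.keys (var v :: 'k::field fa) = {Word [v]}"
  by (simp add: var_def)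

lemma graded_ren: "graded_subst (ren fy fz :: var \<Rightarrow> 'k::field fa)"
  by (simp add: graded_subst_def homog_def ren_def keys_var zcount_def)

lemma ren_Yv[simp]: "ren fy fz (Yv i) = (yv (fy i) :: 'k::field fa)" by (simp add: ren_def)
lemma ren_Zv[simp]: "ren fy fz (Zv i) = (zv (fz i) :: 'k::field fa)" by (simp add: ren_def)
lemma ren_y: "subst (ren fy fz) (yv i) = (yv (fy i) :: 'k::field fa)"
  by (simp add: ren_def)
lemma ren_z: "subst (ren fy fz) (zv i) = (zv (fz i) :: 'k::field fa)"
  by (simp add: ren_def)

lemma gen_inst: "(g :: 'k::field fa) \<in> Ip_gens p \<Longrightarrow> subst (ren fy fz) g \<in> Ip p"
  by (intro Ip_endo Ip_gen graded_ren)

lemma G1a: "comm (comm (yv a) (yv b)) (yv c) \<in> (Ip p :: 'k::field fa set)"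
proof -
  have "lcomm (yv 1) [yv 2, yv 3] \<in> (Ip_gens p :: 'k fa set)" by (simp add: Ip_gens_def)
  from gen_inst[OF this, of "\<lambda>i. if i = 1 then a else if i = 2 then b else c" id]
  show ?thesis by (simp add: lcomm_def)
qed

lemma G1b: "comm (comm (yv a) (yv b)) (zv c) \<in> (Ip p :: 'k::field fa set)"
proof -
  have "lcomm (yv 1) [yv 2, zv 3] \<in> (Ip_gens p :: 'k fa set)" by (simp add: Ip_gens_def)
  from gen_inst[OF this, of "\<lambda>i. if i = 1 then a else b" "\<lambda>_. c"]
  show ?thesis by (simp add: lcomm_def)
qed

lemma G2: "comm (comm (yv a) (zv b)) (yv c) \<in> (Ip p :: 'k::field fa set)"
proof -
  have "lcomm (yv 1) [zv 2, yv 3] \<in> (Ip_gens p :: 'k fa set)" by (simp add: Ip_gens_def)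
  from gen_inst[OF this, of "\<lambda>i. if i = 1 then a else c" "\<lambda>_. b"]
  show ?thesis by (simp add: lcomm_def)
qed

lemma G3: "jord (comm (yv a) (zv b)) (zv c) \<in> (Ip p :: 'k::field fa set)"
proof -
  have "jord (comm (yv 1) (zv 2)) (zv 3) \<in> (Ip_gens p :: 'k fa set)" by (simp add: Ip_gens_def)
  from gen_inst[OF this, of "\<lambda>_. a" "\<lambda>i. if i = 2 then b else c"]
  show ?thesis by simp
qed

lemma G4: "comm (jord (zv a) (zv b)) (zv c) \<in> (Ip p :: 'k::field fa set)"
proof -
  have "comm (jord (zv 1) (zv 2)) (zv 3) \<in> (Ip_gens p :: 'k fa set)" by (simp add: Ip_gens_def)
  from gen_inst[OF this, of id "\<lambda>i. if i = 1 then a else if i = 2 then b else c"]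
  show ?thesis by simp
qed

lemma G5: "jord (zv a) (zv b) * jord (zv c) (zv d) - jord (zv a) (zv c) * jord (zv b) (zv d) \<in> (Ip p :: 'k::field fa set)"
proof -
  have "jord (zv 1) (zv 2) * jord (zv 3) (zv 4) - jord (zv 1) (zv 3) * jord (zv 2) (zv 4) \<in> (Ip_gens p :: 'k fa set)"
    by (simp add: Ip_gens_def)
  from gen_inst[OF this, of id "\<lambda>i. if i = 1 then a else if i = 2 then b else if i = 3 then c else d"]
  show ?thesis by (simp add: subst_diff subst_mult)
qed

lemma G6_gen: "x1 \<in> {yv 1, zv 1} \<Longrightarrow> x4 \<in> {yv 4, zv 4} \<Longrightarrow>
   comm x1 (yv 2) * comm (yv 3) x4 + comm x1 (yv 3) * comm (yv 2) x4 \<in> (Ip_gens p :: 'k::field fa set)"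
  unfolding Ip_gens_def by blast

definition f4 :: "nat \<Rightarrow> nat \<Rightarrow> nat \<Rightarrow> nat \<Rightarrow> nat \<Rightarrow> nat" where
  "f4 a b c d i = (if i = 1 then a else if i = 2 then b else if i = 3 then c else d)"
lemma f4_simps[simp]: "f4 a b c d (Suc 0) = a" "f4 a b c d 2 = b" "f4 a b c d 3 = c" "f4 a b c d 4 = d"
  by (simp_all add: f4_def)

lemma G6yy: "comm (yv a) (yv b) * comm (yv c) (yv d) + comm (yv a) (yv c) * comm (yv b) (yv d) \<in> (Ip p :: 'k::field fa set)"
  using gen_inst[OF G6_gen[of "yv 1" "yv 4"], of "f4 a b c d" id] by (simp add: subst_add subst_mult)
lemma G6yz: "comm (yv a) (yv b) * comm (yv c) (zv d) + comm (yv a) (yv c) * comm (yv b) (zv d) \<in> (Ip p :: 'k::field fa set)"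
  using gen_inst[OF G6_gen[of "yv 1" "zv 4"], of "f4 a b c d" "\<lambda>_. d"] by (simp add: subst_add subst_mult)
lemma G6zy: "comm (zv a) (yv b) * comm (yv c) (yv d) + comm (zv a) (yv c) * comm (yv b) (yv d) \<in> (Ip p :: 'k::field fa set)"
  using gen_inst[OF G6_gen[of "zv 1" "yv 4"], of "f4 a b c d" "\<lambda>_. a"] by (simp add: subst_add subst_mult)
lemma G6zz: "comm (zv a) (yv b) * comm (yv c) (zv d) + comm (zv a) (yv c) * comm (yv b) (zv d) \<in> (Ip p :: 'k::field fa set)"
  using gen_inst[OF G6_gen[of "zv 1" "zv 4"], of "f4 a b c d" "f4 a b c d"] by (simp add: subst_add subst_mult)

lemma G7: "comm (yv a) (zv b) * jord (zv c) (zv d) - comm (yv a) (zv c) * jord (zv b) (zv d) \<in> (Ip p :: 'k::field fa set)"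
proof -
  have "comm (yv 1) (zv 2) * jord (zv 3) (zv 4) - comm (yv 1) (zv 3) * jord (zv 2) (zv 4) \<in> (Ip_gens p :: 'k fa set)"
    by (simp add: Ip_gens_def)
  from gen_inst[OF this, of "\<lambda>_. a" "f4 a b c d"]
  show ?thesis by (simp add: subst_diff subst_mult)
qed

lemma G8: assumes "k \<ge> 1" "2*n + 2*k - 1 = p"
  shows "prod_list (map (\<lambda>t. comm (yv (g t)) (zv c)) [0..<2*k-2]) * jord (zv e) (zv c) * zv c ^ (2*n) \<in> (Ip p :: 'k::field fa set)"
proof -
  have "prod_list (map (\<lambda>t. comm (yv (t+1)) (zv 1)) [0..<2*k-2]) * jord (zv 2) (zv 1) * zv 1 ^ (2*n)
     \<in> (Ip_gens p :: 'k fa set)"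
    unfolding Ip_gens_def using assms by blast
  from gen_inst[OF this, of "\<lambda>i. g (i - 1)" "\<lambda>i. if i = 1 then c else e"]
  show ?thesis by (simp add: subst_mult subst_prod_list subst_power o_def)
qed

lemma G9: assumes "k \<ge> 1" "2*n + 2*k - 1 = p"
  shows "prod_list (map (\<lambda>t. comm (yv (g t)) (zv c)) [0..<2*k-1]) * zv c ^ (2*n) \<in> (Ip p :: 'k::field fa set)"
proof -
  have "prod_list (map (\<lambda>t. comm (yv (t+1)) (zv 1)) [0..<2*k-1]) * zv 1 ^ (2*n)
     \<in> (Ip_gens p :: 'k fa set)"
    unfolding Ip_gens_def using assms by blast
  from gen_inst[OF this, of "\<lambda>i. g (i - 1)" "\<lambda>i. c"]
  show ?thesis by (simp add: subst_mult subst_prod_list subst_power o_def)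
qed


lemma comm_add_right: "comm c (a + b) = comm c a + comm c (b :: 'a::ring)"
  by (simp add: comm_def algebra_simps)
lemma comm_sum_right: "comm c (sum f S) = (\<Sum>x\<in>S. comm c (f x :: 'a::ring))"
proof (induction S rule: infinite_finite_induct)
  case (insert x F) then show ?case by (simp add: comm_add_right)
qed (auto simp: comm_def)

lemma comm_prod_var: "(\<And>v. comm c (var v) \<in> Ip p) \<Longrightarrow> comm c (prod_list (map var ws)) \<in> (Ip p :: 'k::field fa set)"
proof (induction ws)
  case Nil then show ?case by (simp add: comm_def)
next
  case (Cons v ws)
  have "comm c (prod_list (map var (v # ws))) = comm c (var v) * prod_list (map var ws) + var v * comm c (prod_list (map var ws))"
    by (simp add: comm_def algebra_simps)
  then show ?case using Cons by (metis Ip_add Ip_lmult Ip_rmult)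
qed

lemma comm_all: assumes "\<And>v. comm c (var v) \<in> Ip p" shows "comm c x \<in> (Ip p :: 'k::field fa set)"
proof -
  have "comm c x = comm c (subst var x)" by (simp add: subst_id)
  also have "\<dots> = (\<Sum>w\<in>Poly_Mapping.keys x. comm c (const (Poly_Mapping.lookup x w) * prod_list (map var (letters w))))"
    by (simp add: subst_def comm_sum_right)
  finally have eq: "comm c x = \<dots>" .
  have "comm c (const d * prod_list (map var ws)) = const d * comm c (prod_list (map var ws))" for d ws
  proof -
    have "c * const d = const d * c" by (simp add: const_comm)
    then show ?thesis by (simp add: comm_def algebra_simps) (metis mult.assoc)
  qed
  then show ?thesis unfolding eq using comm_prod_var[OF assms]
    by (auto intro!: Ip_sum Ip_lmult)
qed

lemma cg_comm: "comm c x \<in> Ip p \<Longrightarrow> cg p (c * x) (x * (c :: 'k::field fa))"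
  by (simp add: cg_def comm_def)
lemma cg_comm': "comm c x \<in> Ip p \<Longrightarrow> cg p (x * c) (c * (x :: 'k::field fa))"
  by (rule cg_sym, rule cg_comm)

lemma yy_central: "comm (comm (yv a) (yv b)) x \<in> (Ip p :: 'k::field fa set)"
proof (rule comm_all)
  fix v show "comm (comm (yv a) (yv b)) (var v) \<in> (Ip p :: 'k fa set)"
    by (cases v) (auto intro: G1a G1b)
qed

lemma jord_y: "comm (jord (zv a) (zv b)) (yv c) = - (jord (comm (yv c) (zv a)) (zv b) + jord (comm (yv c) (zv b)) (zv a) :: 'k::field fa)"
  by (simp add: comm_def jord_def algebra_simps)

lemma jj_central: "comm (jord (zv a) (zv b)) x \<in> (Ip p :: 'k::field fa set)"
proof (rule comm_all)
  fix v show "comm (jord (zv a) (zv b)) (var v) \<in> (Ip p :: 'k fa set)"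
  proof (cases v)
    case (Yv c)
    have "comm (jord (zv a) (zv b)) (yv c) \<in> (Ip p :: 'k fa set)"
      unfolding jord_y by (simp only: Ip_uminus_iff) (intro Ip_add G3)
    then show ?thesis using Yv by simp
  next
    case (Zv c) then show ?thesis by (simp add: G4)
  qed
qed

lemma yzyz_identity: "jord (A::'k::field fa) (comm y z) = y * jord A z + comm A y * z + z * comm A y - jord A z * y"
  by (simp add: comm_def jord_def algebra_simps)

lemma yz_anti: "jord (comm (yv a) (zv b)) (comm (yv c) (zv d)) \<in> (Ip p :: 'k::field fa set)"
  unfolding yzyz_identity by (intro Ip_add Ip_diff Ip_lmult Ip_rmult G2 G3)

lemma cg_anti: "jord A B \<in> Ip p \<Longrightarrow> cg p (A * B) (- (B * (A::'k::field fa)))"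
  by (simp add: cg_def jord_def)

lemma yz_z_anti: "cg p (comm (yv a) (zv b) * zv c) (- (zv c * comm (yv a) (zv b) :: 'k::field fa))"
  by (rule cg_anti, rule G3)
lemma yz_yz_anti: "cg p (comm (yv a) (zv b) * comm (yv c) (zv d)) (- (comm (yv c) (zv d) * comm (yv a) (zv b) :: 'k::field fa))"
  by (rule cg_anti, rule yz_anti)

lemma yz_zs_anti: "cg p (comm (yv a) (zv b) * prod_list (map zv ks))
    (const ((-1) ^ length ks) * (prod_list (map zv ks) * comm (yv a) (zv b)) :: 'k::field fa)"
proof (induction ks)
  case Nil then show ?case by simp
next
  case (Cons k ks)
  let ?A = "comm (yv a) (zv b) :: 'k fa"
  have "?A * prod_list (map zv (k # ks)) = (?A * zv k) * prod_list (map zv ks)" by (simp add: mult.assoc)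
  also have "cg p \<dots> ((- (zv k * ?A)) * prod_list (map zv ks))"
    by (rule cg_rmult, rule yz_z_anti)
  also have "\<dots> = - (zv k * (?A * prod_list (map zv ks)))" by (simp add: mult.assoc)
  also have "cg p \<dots> (- (zv k * (const ((-1) ^ length ks) * (prod_list (map zv ks) * ?A))))"
    by (rule cg_uminus, rule cg_lmult, rule Cons)
  also have "\<dots> = const ((-1) ^ length (k # ks)) * (prod_list (map zv (k # ks)) * ?A)"
  proof -
    have "zv k * const ((-1) ^ length ks) = const ((-1) ^ length ks) * (zv k :: 'k fa)"
      by (simp add: const_comm)
    then show ?thesis by (simp add: const_mult const_uminus mult.assoc[symmetric])
  qed
  finally show ?case .
qed

lemma central_cg0: "(\<And>x. comm c x \<in> Ip p) \<Longrightarrow> cg p (x * c) (c * (x :: 'k::field fa))"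
  by (rule cg_comm')


definition swp :: "nat \<Rightarrow> 'a list \<Rightarrow> 'a list" where
  "swp i xs = xs[i := xs ! Suc i, Suc i := xs ! i]"

lemma length_swp[simp]: "length (swp i xs) = length xs" by (simp add: swp_def)
lemma nth_swp: "Suc i < length xs \<Longrightarrow>
  swp i xs ! k = (if k = i then xs ! Suc i else if k = Suc i then xs ! i else xs ! k)"
  by (simp add: swp_def nth_list_update)

abbreviation PL :: "(nat \<Rightarrow> 'k::field fa) \<Rightarrow> nat \<Rightarrow> 'k fa" where
  "PL f m \<equiv> prod_list (map f [0..<m])"

definition fY :: "nat list \<Rightarrow> nat \<Rightarrow> 'k::field fa" where
  "fY is t = comm (yv (is ! (2*t))) (yv (is ! (2*t+1)))"
definition fYZ :: "nat \<Rightarrow> nat list \<Rightarrow> nat list \<Rightarrow> nat \<Rightarrow> 'k::field fa" where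
  "fYZ m is js t = comm (yv (is ! (2*m+t))) (zv (js ! t))"
definition fZZ :: "nat \<Rightarrow> nat list \<Rightarrow> nat \<Rightarrow> 'k::field fa" where
  "fZZ n js t = jord (zv (js ! (n+2*t))) (zv (js ! (n+2*t+1)))"

lemma hpoly_blocks: "hpoly m n r is js = PL (fY is) m * PL (fYZ m is js) n * PL (fZZ n js) r"
  unfolding hpoly_def fY_def[abs_def] fYZ_def[abs_def] fZZ_def[abs_def] by simp

lemma PL_split1: "t < m \<Longrightarrow> PL f m = PL f t * f t * prod_list (map f [Suc t..<m])"
proof -
  assume "t < m"
  then have "[0..<m] = [0..<t] @ [t..<m]" using upt_add_eq_append[of 0 t "m-t"] by simp
  also have "[t..<m] = t # [Suc t..<m]" using \<open>t < m\<close> by (simp add: upt_conv_Cons)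
  finally have "[0..<m] = [0..<t] @ t # [Suc t..<m]" .
  then show ?thesis by (simp add: mult.assoc)
qed

lemma PL_split2: "Suc t < m \<Longrightarrow> PL f m = PL f t * (f t * f (Suc t)) * prod_list (map f [Suc (Suc t)..<m])"
proof -
  assume "Suc t < m"
  then have "[0..<m] = [0..<t] @ [t..<m]" using upt_add_eq_append[of 0 t "m-t"] by simp
  also have "[t..<m] = t # Suc t # [Suc (Suc t)..<m]" using \<open>Suc t < m\<close> by (simp add: upt_conv_Cons)
  finally have "[0..<m] = [0..<t] @ t # Suc t # [Suc (Suc t)..<m]" .
  then show ?thesis by (simp add: mult.assoc)
qed

lemma cg_const_mid: "cg p X (const e * Y) \<Longrightarrow> cg p (L * X * R) (const e * (L * Y * (R :: 'k::field fa)))"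
proof -
  assume "cg p X (const e * Y)"
  then have "cg p (L * X * R) (L * (const e * Y) * R)" by (intro cg_rmult cg_lmult)
  also have "L * (const e * Y) * R = const e * (L * Y * R)"
    by (metis const_comm mult.assoc)
  finally show ?thesis .
qed

lemma PL_local1:
  assumes "t < m" "\<And>s. s < m \<Longrightarrow> s \<noteq> t \<Longrightarrow> g s = f s" "cg p (g t) (const e * f t)"
  shows "cg p (PL g m) (const e * PL f (m::nat))"
proof -
  have L: "PL g t = PL f t" using assms by (intro arg_cong[where f=prod_list] map_cong) auto
  have R: "prod_list (map g [Suc t..<m]) = prod_list (map f [Suc t..<m])"
    using assms by (intro arg_cong[where f=prod_list] map_cong) auto
  show ?thesis unfolding PL_split1[OF assms(1), of g] PL_split1[OF assms(1), of f] L R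
    by (rule cg_const_mid) (rule assms(3))
qed

lemma PL_local2:
  assumes "Suc t < m" "\<And>s. s < m \<Longrightarrow> s \<noteq> t \<Longrightarrow> s \<noteq> Suc t \<Longrightarrow> g s = f s"
    "cg p (g t * g (Suc t)) (const e * (f t * f (Suc t)))"
  shows "cg p (PL g m) (const e * PL f (m::nat))"
proof -
  have L: "PL g t = PL f t" using assms by (intro arg_cong[where f=prod_list] map_cong) auto
  have R: "prod_list (map g [Suc (Suc t)..<m]) = prod_list (map f [Suc (Suc t)..<m])"
    using assms by (intro arg_cong[where f=prod_list] map_cong) auto
  show ?thesis unfolding PL_split2[OF assms(1), of g] PL_split2[OF assms(1), of f] L R
    by (rule cg_const_mid) (rule assms(3))
qed

lemma PL_Suc_last: "PL f (Suc m) = PL f m * f m" by simp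
lemma PL_Suc_first: "PL f (Suc m) = f 0 * PL (\<lambda>t. f (Suc t)) m"
  by (induction m) (simp_all add: mult.assoc[symmetric])

lemma PL_cross:
  assumes "\<And>s. s < M \<Longrightarrow> g s = f s" "\<And>s. s < N \<Longrightarrow> k (Suc s) = h (Suc s)"
    "cg p (g M * k 0) (const e * (f M * h 0))"
  shows "cg p (PL g (Suc M) * PL k (Suc N)) (const e * (PL f (Suc M) * PL h (Suc N)))"
proof -
  have L: "PL g M = PL f M" using assms by (intro arg_cong[where f=prod_list] map_cong) auto
  have R: "PL (\<lambda>t. k (Suc t)) N = PL (\<lambda>t. h (Suc t)) N"
    using assms by (intro arg_cong[where f=prod_list] map_cong) auto
  have "PL g (Suc M) * PL k (Suc N) = PL g M * (g M * k 0) * PL (\<lambda>t. k (Suc t)) N"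
    by (simp only: PL_Suc_last[of g M] PL_Suc_first[of k N] mult.assoc)
  moreover have "PL f (Suc M) * PL h (Suc N) = PL f M * (f M * h 0) * PL (\<lambda>t. h (Suc t)) N"
    by (simp only: PL_Suc_last[of f M] PL_Suc_first[of h N] mult.assoc)
  ultimately show ?thesis using cg_const_mid[OF assms(3)] L R by simp
qed


lemma comm_swap: "comm a b = - comm b (a :: 'a::ring)" by (simp add: comm_def)
lemma jord_swap: "jord a b = jord b (a :: 'a::ring)" by (simp add: jord_def add.commute)

lemma cg_neg_of_sum: "X + Y \<in> Ip p \<Longrightarrow> cg p Y (const (-1) * (X :: 'k::field fa))"
  by (simp add: cg_def const_uminus add.commute)
lemma cg_of_diff: "X - Y \<in> Ip p \<Longrightarrow> cg p Y (const 1 * (X :: 'k::field fa))"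
  unfolding cg_def using Ip_uminus by fastforce

lemma cg_mult_const_right: "cg p X (const e * Y) \<Longrightarrow> cg p (X * Z) (const e * (Y * (Z :: 'k::field fa)))"
  using cg_rmult[of p X "const e * Y" Z] by (simp add: mult.assoc)
lemma cg_mult_const_left: "cg p X (const e * Y) \<Longrightarrow> cg p (Z * X) (const e * (Z * (Y :: 'k::field fa)))"
  using cg_const_mid[of p X e Y Z 1] by simp

lemma is_swap:
  assumes len: "length is = 2*m+n" and i: "Suc i < 2*m+n"
  shows "cg p (hpoly m n r (swp i is) js) (const (-1) * (hpoly m n r is js :: 'k::field fa))"
proof -
  let ?is = "swp i is"
  have nth: "\<And>k. ?is ! k = (if k = i then is ! Suc i else if k = Suc i then is ! i else is ! k)"
    using nth_swp[of i "is"] len i by simp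
  have main: "cg p (PL (fY ?is) m * PL (fYZ m ?is js) n) (const (-1) * (PL (fY is) m * PL (fYZ m is js) n) :: 'k fa)"
  proof (cases "Suc i < 2*m")
    case True
    have YZ: "PL (fYZ m ?is js) n = (PL (fYZ m is js) n :: 'k fa)"
      using True by (intro arg_cong[where f=prod_list] map_cong) (auto simp: fYZ_def nth)
    have "cg p (PL (fY ?is) m) (const (-1) * (PL (fY is) m :: 'k fa))"
    proof (cases "even i")
      case True
      then obtain t where t: "i = 2*t" by (auto elim: evenE)
      show ?thesis
      proof (rule PL_local1[where t=t])
        show "t < m" using \<open>Suc i < 2*m\<close> t by simp
        show "fY ?is s = fY is s" if "s < m" "s \<noteq> t" for s
          unfolding fY_def nth using that t by auto
        show "cg p (fY ?is t) (const (-1) * (fY is t :: 'k fa))"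
          unfolding fY_def nth using t by (simp add: const_uminus comm_swap[of "yv (is ! Suc (2*t))"])
      qed
    next
      case False
      then obtain t where t: "i = 2*t+1" by (metis oddE)
      show ?thesis
      proof (rule PL_local2[where t=t])
        show "Suc t < m" using \<open>Suc i < 2*m\<close> t by simp
        show "fY ?is s = fY is s" if "s < m" "s \<noteq> t" "s \<noteq> Suc t" for s
          unfolding fY_def nth using that t by auto
        show "cg p (fY ?is t * fY ?is (Suc t)) (const (-1) * (fY is t * fY is (Suc t) :: 'k fa))"
          unfolding fY_def nth using t G6yy[of "is ! (2*t)" "is ! (2*t+1)" "is ! (2*t+2)" "is ! (2*t+3)" p]
          by (intro cg_neg_of_sum) (simp add: numeral_eq_Suc)
      qed
    qed
    then show ?thesis unfolding YZ by (rule cg_mult_const_right)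
  next
    case False
    show ?thesis
    proof (cases "Suc i = 2*m")
      case True
      then obtain M where M: "m = Suc M" "i = 2*M+1" by (cases m) auto
      from i True obtain N where N: "n = Suc N" by (cases n) auto
      show ?thesis unfolding M(1) N
      proof (rule PL_cross)
        show "fY ?is s = fY is s" if "s < M" for s unfolding fY_def nth using that M by auto
        show "fYZ (Suc M) ?is js (Suc s) = fYZ (Suc M) is js (Suc s)" for s
          unfolding fYZ_def nth using M by auto
        show "cg p (fY ?is M * fYZ (Suc M) ?is js 0) (const (-1) * (fY is M * fYZ (Suc M) is js 0) :: 'k fa)"
          unfolding fY_def fYZ_def nth using M G6yz[of "is ! (2*M)" "is ! (2*M+1)" "is ! (2*M+2)" "js ! 0" p]
          by (intro cg_neg_of_sum) (simp add: numeral_eq_Suc)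
      qed
    next
      case False
      with \<open>\<not> Suc i < 2*m\<close> have "2*m \<le> i" by simp
      then obtain t where t: "i = 2*m+t" using le_Suc_ex by blast
      have Y: "PL (fY ?is) m = (PL (fY is) m :: 'k fa)"
        apply (intro arg_cong[where f=prod_list] map_cong refl)
        apply (simp only: fY_def nth)
        using t by auto
      have "cg p (PL (fYZ m ?is js) n) (const (-1) * (PL (fYZ m is js) n :: 'k fa))"
      proof (rule PL_local2[where t=t])
        show "Suc t < n" using i t by simp
        show "fYZ m ?is js s = fYZ m is js s" if "s < n" "s \<noteq> t" "s \<noteq> Suc t" for s
          unfolding fYZ_def nth using that t by auto
        have "comm (zv (js ! t)) (yv (is ! (2*m+t))) * comm (yv (is ! (2*m+t+1))) (zv (js ! Suc t))
             + comm (zv (js ! t)) (yv (is ! (2*m+t+1))) * comm (yv (is ! (2*m+t))) (zv (js ! Suc t))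
             \<in> (Ip p :: 'k fa set)" by (rule G6zz)
        then have "fYZ m is js t * fYZ m is js (Suc t) + fYZ m ?is js t * fYZ m ?is js (Suc t) \<in> (Ip p :: 'k fa set)"
          unfolding fYZ_def nth using t by (simp add: comm_swap[of "zv _"]) (metis Ip_uminus_iff minus_add_distrib diff_conv_add_uminus)
        then show "cg p (fYZ m ?is js t * fYZ m ?is js (Suc t)) (const (-1) * (fYZ m is js t * fYZ m is js (Suc t)) :: 'k fa)"
          by (rule cg_neg_of_sum)
      qed
      then show ?thesis unfolding Y by (rule cg_mult_const_left)
    qed
  qed
  show ?thesis unfolding hpoly_blocks using cg_mult_const_right[OF main] .
qed


lemma js_swap:
  assumes len: "length js = n+2*r" and i: "Suc i < n+2*r"
  shows "cg p (hpoly m n r is (swp i js)) (const 1 * (hpoly m n r is js :: 'k::field fa))"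
proof -
  let ?js = "swp i js"
  have nth: "\<And>k. ?js ! k = (if k = i then js ! Suc i else if k = Suc i then js ! i else js ! k)"
    using nth_swp[of i js] len i by simp
  have main: "cg p (PL (fYZ m is ?js) n * PL (fZZ n ?js) r) (const 1 * (PL (fYZ m is js) n * PL (fZZ n js) r) :: 'k fa)"
  proof (cases "Suc i < n")
    case True
    have ZZ: "PL (fZZ n ?js) r = (PL (fZZ n js) r :: 'k fa)"
      apply (intro arg_cong[where f=prod_list] map_cong refl)
      apply (simp only: fZZ_def nth)
      using True by auto
    have "cg p (PL (fYZ m is ?js) n) (const 1 * (PL (fYZ m is js) n :: 'k fa))"
    proof (rule PL_local2[where t=i])
      show "Suc i < n" by (rule True)
      show "fYZ m is ?js s = fYZ m is js s" if "s < n" "s \<noteq> i" "s \<noteq> Suc i" for s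
        unfolding fYZ_def nth using that by auto
      let ?a = "is ! (2*m+i)" and ?c = "is ! (2*m+Suc i)" and ?b = "js ! i" and ?d = "js ! Suc i"
      have h1: "comm (zv ?b) (yv ?a) * comm (yv ?c) (zv ?d) + comm (zv ?b) (yv ?c) * comm (yv ?a) (zv ?d)
             \<in> (Ip p :: 'k fa set)" by (rule G6zz)
      have h2: "jord (comm (yv ?c) (zv ?b)) (comm (yv ?a) (zv ?d)) \<in> (Ip p :: 'k fa set)" by (rule yz_anti)
      have eq: "(comm (yv ?a) (zv ?b) * comm (yv ?c) (zv ?d) :: 'k fa) - comm (yv ?a) (zv ?d) * comm (yv ?c) (zv ?b)
         = - (comm (zv ?b) (yv ?a) * comm (yv ?c) (zv ?d) + comm (zv ?b) (yv ?c) * comm (yv ?a) (zv ?d))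
           - jord (comm (yv ?c) (zv ?b)) (comm (yv ?a) (zv ?d))"
        by (simp add: comm_def jord_def algebra_simps)
      then have "(comm (yv ?a) (zv ?b) * comm (yv ?c) (zv ?d) :: 'k fa) - comm (yv ?a) (zv ?d) * comm (yv ?c) (zv ?b) \<in> Ip p"
        unfolding eq by (intro Ip_diff Ip_uminus h1 h2)
      then show "cg p (fYZ m is ?js i * fYZ m is ?js (Suc i)) (const 1 * (fYZ m is js i * fYZ m is js (Suc i)) :: 'k fa)"
        unfolding fYZ_def nth by (intro cg_of_diff) simp
    qed
    then show ?thesis unfolding ZZ by (rule cg_mult_const_right)
  next
    case False
    show ?thesis
    proof (cases "Suc i = n")
      case True
      then obtain N where N: "n = Suc N" "i = N" by (cases n) auto
      from i True obtain R where R: "r = Suc R" by (cases r) auto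
      show ?thesis unfolding N(1) R
      proof (rule PL_cross)
        show "fYZ m is ?js s = fYZ m is js s" if "s < N" for s unfolding fYZ_def nth using that N by auto
        show "fZZ (Suc N) ?js (Suc s) = fZZ (Suc N) js (Suc s)" for s
          unfolding fZZ_def nth using N by auto
        have "comm (yv (is ! (2*m+N))) (zv (js ! N)) * jord (zv (js ! Suc N)) (zv (js ! Suc (Suc N)))
            - comm (yv (is ! (2*m+N))) (zv (js ! Suc N)) * jord (zv (js ! N)) (zv (js ! Suc (Suc N)))
             \<in> (Ip p :: 'k fa set)" by (rule G7)
        then show "cg p (fYZ m is ?js N * fZZ (Suc N) ?js 0) (const 1 * (fYZ m is js N * fZZ (Suc N) js 0) :: 'k fa)"
          unfolding fYZ_def fZZ_def nth using N by (intro cg_of_diff) simp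
      qed
    next
      case False
      with \<open>\<not> Suc i < n\<close> have "n \<le> i" by simp
      then obtain u where u: "i = n+u" using le_Suc_ex by blast
      have YZ: "PL (fYZ m is ?js) n = (PL (fYZ m is js) n :: 'k fa)"
        apply (intro arg_cong[where f=prod_list] map_cong refl)
        apply (simp only: fYZ_def nth)
        using u by auto
      have "cg p (PL (fZZ n ?js) r) (const 1 * (PL (fZZ n js) r :: 'k fa))"
      proof (cases "even u")
        case True
        then obtain t where t: "u = 2*t" by (auto elim: evenE)
        show ?thesis
        proof (rule PL_local1[where t=t])
          show "t < r" using i u t by simp
          show "fZZ n ?js s = fZZ n js s" if "s < r" "s \<noteq> t" for s
            unfolding fZZ_def nth using that u t by auto
          show "cg p (fZZ n ?js t) (const 1 * (fZZ n js t :: 'k fa))"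
            unfolding fZZ_def nth using u t by (simp add: jord_swap)
        qed
      next
        case False
        then obtain t where t: "u = 2*t+1" by (metis oddE)
        show ?thesis
        proof (rule PL_local2[where t=t])
          show "Suc t < r" using i u t by simp
          show "fZZ n ?js s = fZZ n js s" if "s < r" "s \<noteq> t" "s \<noteq> Suc t" for s
            unfolding fZZ_def nth using that u t by auto
          have "jord (zv (js ! (n+2*t))) (zv (js ! (n+2*t+1))) * jord (zv (js ! (n+2*t+2))) (zv (js ! (n+2*t+3)))
             - jord (zv (js ! (n+2*t))) (zv (js ! (n+2*t+2))) * jord (zv (js ! (n+2*t+1))) (zv (js ! (n+2*t+3)))
             \<in> (Ip p :: 'k fa set)" by (rule G5)
          then show "cg p (fZZ n ?js t * fZZ n ?js (Suc t)) (const 1 * (fZZ n js t * fZZ n js (Suc t)) :: 'k fa)"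
            unfolding fZZ_def nth using u t by (intro cg_of_diff) (simp add: numeral_eq_Suc)
        qed
      qed
      then show ?thesis unfolding YZ by (rule cg_mult_const_left)
    qed
  qed
  have "cg p (PL (fY is) m * (PL (fYZ m is ?js) n * PL (fZZ n ?js) r))
     (const 1 * (PL (fY is) m * (PL (fYZ m is js) n * PL (fZZ n js) r)) :: 'k fa)"
    by (rule cg_mult_const_left[OF main])
  then show ?thesis unfolding hpoly_blocks by (simp add: mult.assoc)
qed


definition swap_prop :: "nat \<Rightarrow> 'k::field \<Rightarrow> nat \<Rightarrow> (nat list \<Rightarrow> 'k fa) \<Rightarrow> bool" where
  "swap_prop p s L F \<longleftrightarrow> (\<forall>xs i. length xs = L \<longrightarrow> Suc i < L \<longrightarrow> cg p (F (swp i xs)) (const s * F xs))"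

lemma cg_const_lmult: "cg p X Y \<Longrightarrow> cg p (const c * X) (const c * (Y :: 'k::field fa))"
  by (rule cg_lmult)

lemma swp_Cons: "swp (Suc i) (y # zs) = y # swp i zs" by (simp add: swp_def)

lemma swp_move_list:
  assumes "Suc j < length xs"
  shows "swp j xs ! j # take j (swp j xs) @ drop (Suc j) (swp j xs) = xs ! Suc j # take (Suc j) xs @ drop (Suc (Suc j)) xs"
proof -
  have a: "swp j xs ! j = xs ! Suc j" using assms by (simp add: nth_swp)
  have b: "take j (swp j xs) = take j xs" by (simp add: swp_def)
  have c: "drop (Suc j) (swp j xs) = xs ! j # drop (Suc (Suc j)) xs"
  proof -
    have "drop (Suc j) (swp j xs) = drop (Suc j) (xs[Suc j := xs ! j])"
      by (simp add: swp_def drop_update_cancel list_update_swap[of j "Suc j"])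
    also have "\<dots> = xs ! j # drop (Suc (Suc j)) xs"
      using assms by (simp add: upd_conv_take_nth_drop)
    finally show ?thesis .
  qed
  have d: "take (Suc j) xs = take j xs @ [xs ! j]" using assms by (simp add: take_Suc_conv_app_nth)
  show ?thesis using a b c d by simp
qed

lemma move_front:
  assumes sp: "swap_prop p s L F" and ss: "s * s = 1"
  shows "length xs = L \<Longrightarrow> j < L \<Longrightarrow> \<exists>k. cg p (F xs) (const (s ^ k) * F (xs ! j # take j xs @ drop (Suc j) xs))"
proof (induction j arbitrary: xs)
  case 0
  then have "xs = xs ! 0 # drop (Suc 0) xs" by (cases xs) auto
  then have "cg p (F xs) (const (s ^ 0) * F (xs ! 0 # take 0 xs @ drop (Suc 0) xs))" by simp
  then show ?case by blast
next
  case (Suc j)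
  let ?xs = "swp j xs"
  have l: "length ?xs = L" using Suc by simp
  obtain k where k: "cg p (F ?xs) (const (s ^ k) * F (?xs ! j # take j ?xs @ drop (Suc j) ?xs))"
    using Suc.IH[OF l] Suc.prems by auto
  have sw: "cg p (F ?xs) (const s * F xs)" using sp Suc.prems unfolding swap_prop_def by auto
  have "F xs = const s * (const s * F xs)" using ss by (simp add: mult.assoc[symmetric] const_mult[symmetric])
  also have "cg p \<dots> (const s * F ?xs)" by (rule cg_const_lmult, rule cg_sym, rule sw)
  also have "cg p \<dots> (const s * (const (s ^ k) * F (?xs ! j # take j ?xs @ drop (Suc j) ?xs)))"
    by (rule cg_const_lmult, rule k)
  also have "\<dots> = const (s ^ Suc k) * F (xs ! Suc j # take (Suc j) xs @ drop (Suc (Suc j)) xs)"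
    using swp_move_list[of j xs] Suc.prems by (simp add: mult.assoc[symmetric] const_mult[symmetric])
  finally show ?case by blast
qed

lemma sort_cons_min:
  assumes "y \<in> set xs" "\<forall>x\<in>set xs. y \<le> x" "mset xs = mset (y # zs)"
  shows "sort xs = y # sort (zs :: nat list)"
proof -
  have "set zs \<subseteq> set xs" using assms(3) by (metis insert_subset mset.simps(2) set_mset_mset set_subset_Cons subset_code(1) set_mset_add_mset_insert)
  then have "sorted (y # sort zs)" using assms(2) by auto
  moreover have "mset (y # sort zs) = mset xs" using assms(3) by simp
  ultimately show ?thesis by (metis properties_for_sort)
qed

lemma sort_lemma:
  assumes ss: "s * s = 1"
  shows "swap_prop p s L F \<Longrightarrow> length xs = L \<Longrightarrow> \<exists>k. cg p (F xs) (const (s ^ k) * F (sort xs))"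
proof (induction L arbitrary: F xs)
  case 0 then show ?case by (intro exI[of _ 0]) simp
next
  case (Suc L)
  define y where "y = Min (set xs)"
  have ne: "xs \<noteq> []" using Suc.prems by auto
  have yin: "y \<in> set xs" unfolding y_def using ne by simp
  then obtain j where j: "j < length xs" "xs ! j = y" by (meson in_set_conv_nth)
  define zs where "zs = take j xs @ drop (Suc j) xs"
  obtain k1 where k1: "cg p (F xs) (const (s ^ k1) * F (y # zs))"
    using move_front[OF Suc.prems(1) ss Suc.prems(2), of j] j Suc.prems unfolding zs_def by auto
  have mz: "mset xs = mset (y # zs)"
    using id_take_nth_drop[OF j(1)] j(2) unfolding zs_def
    by (metis mset.simps(2) mset_append add_mset_add_single union_commute union_assoc union_mset_add_mset_left)
  have lz: "length zs = L" unfolding zs_def using j Suc.prems by simp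
  define F' where "F' ws = F (y # ws)" for ws
  have sp': "swap_prop p s L F'"
    unfolding swap_prop_def F'_def
  proof (intro allI impI)
    fix ws :: "nat list" and i assume "length ws = L" "Suc i < L"
    then show "cg p (F (y # swp i ws)) (const s * F (y # ws))"
      using Suc.prems(1) unfolding swap_prop_def by (metis Suc_less_eq length_Cons swp_Cons)
  qed
  obtain k2 where k2: "cg p (F' zs) (const (s ^ k2) * F' (sort zs))" using Suc.IH[OF sp' lz] by auto
  have so: "sort xs = y # sort zs"
    by (rule sort_cons_min[OF yin _ mz]) (simp add: y_def)
  have "cg p (F xs) (const (s ^ k1) * (const (s ^ k2) * F' (sort zs)))"
    using cg_trans[OF k1 cg_const_lmult[OF k2[unfolded F'_def]]] unfolding F'_def .
  then have "cg p (F xs) (const (s ^ (k1 + k2)) * F (sort xs))"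
    by (simp add: so F'_def power_add const_mult mult.assoc)
  then show ?case by blast
qed

lemma sorted_nondistinct:
  "sorted (ys :: nat list) \<Longrightarrow> \<not> distinct ys \<Longrightarrow> \<exists>i. Suc i < length ys \<and> ys ! i = ys ! Suc i"
proof (induction ys)
  case Nil then show ?case by simp
next
  case (Cons a ys)
  show ?case
  proof (cases "a \<in> set ys")
    case True
    then obtain b ys' where ys: "ys = b # ys'" by (cases ys) auto
    have "a \<le> b" using Cons.prems ys by simp
    moreover have "b \<le> a" using Cons.prems ys True by auto
    ultimately show ?thesis using ys by (intro exI[of _ 0]) simp
  next
    case False
    then have "\<not> distinct ys" using Cons.prems by simp
    then obtain i where "Suc i < length ys" "ys ! i = ys ! Suc i" using Cons by auto
    then show ?thesis by (intro exI[of _ "Suc i"]) simp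
  qed
qed

lemma swp_same: "xs ! i = xs ! Suc i \<Longrightarrow> swp i xs = xs"
  unfolding swp_def by (metis list_update_id)

lemma two_Ip: "(2::'k::field) \<noteq> 0 \<Longrightarrow> X + X \<in> Ip p \<Longrightarrow> (X :: 'k fa) \<in> Ip p"
proof -
  assume h: "(2::'k) \<noteq> 0" "X + X \<in> Ip p"
  have "const (1/2) * (X + X) \<in> Ip p" using h(2) by (rule Ip_lmult)
  moreover have e: "X + X = const (1+1) * X" by (simp only: const_add const_1 distrib_right mult_1_left)
  have "const (1/2) * (X + X) = const ((1/2) * (1+1)) * X"
    by (simp only: e const_mult mult.assoc)
  moreover have "(1/2) * (1+1) = (1::'k)" using h(1) by simp
  ultimately show ?thesis by simp
qed

lemma alt_nondistinct:
  assumes two: "(2::'k::field) \<noteq> 0" and sp: "swap_prop p (-1) L (F :: nat list \<Rightarrow> 'k fa)"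
    and len: "length xs = L" and nd: "\<not> distinct xs"
  shows "F xs \<in> Ip p"
proof -
  obtain k where k: "cg p (F xs) (const ((-1) ^ k) * F (sort xs))"
    using sort_lemma[of "-1::'k" p L F xs] sp len by auto
  obtain i where i: "Suc i < length (sort xs)" "sort xs ! i = sort xs ! Suc i"
    using sorted_nondistinct[of "sort xs"] nd by auto
  have "cg p (F (sort xs)) (const (-1) * F (sort xs))"
    using sp i len unfolding swap_prop_def by (metis length_sort swp_same)
  then have "F (sort xs) + F (sort xs) \<in> Ip p" by (simp add: cg_def const_uminus)
  then have "F (sort xs) \<in> Ip p" by (rule two_Ip[OF two])
  then have "const ((-1) ^ k) * F (sort xs) \<in> Ip p" by (rule Ip_lmult)
  then show ?thesis by (rule cg_Ip[OF k])
qed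


lemma PL_split: "a \<le> b \<Longrightarrow> PL f b = PL f a * prod_list (map f [a..<b])"
proof -
  assume "a \<le> b"
  then have "[0..<b] = [0..<a] @ [a..<b]" using upt_add_eq_append[of 0 a "b-a"] by simp
  then show ?thesis by simp
qed

lemma PL_cong: "(\<And>t. t < a \<Longrightarrow> f t = g t) \<Longrightarrow> PL f a = PL g a"
  by (intro arg_cong[where f=prod_list] map_cong) auto

lemma jord_same: "jord (x::'k::field fa) x = const 2 * x ^ 2"
proof -
  have "const (2::'k) = 1 + 1" by (simp only: one_add_one[symmetric] const_add const_1)
  then show ?thesis unfolding jord_def power2_eq_square by (simp only: distrib_right mult_1_left)
qed

lemma PL_jord_same: "PL (\<lambda>t. jord (zv c) (zv c)) k = const (2 ^ k) * (zv c ^ (2*k) :: 'k::field fa)"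
proof (induction k)
  case 0 then show ?case by simp
next
  case (Suc k)
  have "PL (\<lambda>t. jord (zv c) (zv c)) (Suc k) = PL (\<lambda>t. jord (zv c) (zv c)) k * jord (zv c) (zv c)" by simp
  also have "\<dots> = const (2 ^ k) * zv c ^ (2*k) * (jord (zv c) (zv c) :: 'k fa)" by (simp only: Suc.IH)
  also have "\<dots> = const (2 ^ k) * zv c ^ (2*k) * (const 2 * zv c ^ 2 :: 'k fa)" by (simp only: jord_same)
  also have "\<dots> = const (2 ^ k) * const 2 * (zv c ^ (2*k) * zv c ^ 2 :: 'k fa)"
    by (metis (no_types, lifting) const_comm mult.assoc)
  also have "\<dots> = const (2 ^ Suc k) * zv c ^ (2 * Suc k)"
    by (simp add: const_mult[symmetric] power_add[symmetric] mult.commute)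
  finally show ?case .
qed

section \<open>Vanishing of high degree\<close>

lemma A1:
  assumes "p \<le> n" "odd p" "\<And>t. t < p \<Longrightarrow> arr ! t = c"
  shows "hpoly m n r is arr \<in> (Ip p :: 'k::field fa set)"
proof -
  obtain q where "p = 2*q + 1" using assms(2) by (auto elim: oddE)
  then obtain k where k: "p = 2*k - 1" "k \<ge> 1" by (intro that[of "q+1"]) auto
  let ?g = "\<lambda>t. is ! (2*m+t)"
  have "PL (\<lambda>t. comm (yv (?g t)) (zv c)) (2*k-1) * zv c ^ (2*0) \<in> (Ip p :: 'k fa set)"
    by (rule G9) (use k in auto)
  moreover have "2*k-1 = p" using k by simp
  ultimately have G0: "PL (\<lambda>t. comm (yv (?g t)) (zv c)) p \<in> (Ip p :: 'k fa set)" by simp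
  have "PL (fYZ m is arr) p = (PL (\<lambda>t. comm (yv (?g t)) (zv c)) p :: 'k fa)"
    by (rule PL_cong) (simp add: fYZ_def assms(3))
  with G0 have G: "PL (fYZ m is arr) p \<in> (Ip p :: 'k fa set)" by simp
  have eq: "hpoly m n r is arr = PL (fY is) m * (PL (fYZ m is arr) p * prod_list (map (fYZ m is arr) [p..<n])) * PL (fZZ n arr) r"
    unfolding hpoly_blocks PL_split[OF assms(1), of "fYZ m is arr"] ..
  show ?thesis unfolding eq mult.assoc[symmetric] by (rule Ip_rmult, rule Ip_rmult, rule Ip_lmult, rule G)
qed


lemma A2:
  assumes "n < p" "odd n" "odd p" "p \<le> n + 2*r" "\<And>t. t < p \<Longrightarrow> arr ! t = c"
  shows "hpoly m n r is arr \<in> (Ip p :: 'k::field fa set)"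
proof -
  obtain q where "n = 2*q + 1" using assms(2) by (auto elim: oddE)
  then obtain k where k: "n = 2*k - 1" "k \<ge> 1" by (intro that[of "q+1"]) auto
  define n' where "n' = (p - n) div 2"
  have n': "2*n' = p - n" using assms(1,2,3) unfolding n'_def by (auto elim!: oddE)
  have n'r: "n' \<le> r" using n' assms(4) by simp
  let ?g = "\<lambda>t. is ! (2*m+t)"
  have "PL (\<lambda>t. comm (yv (?g t)) (zv c)) (2*k-1) * zv c ^ (2*n') \<in> (Ip p :: 'k fa set)"
    by (rule G9) (use k n' assms(1) in auto)
  moreover have "2*k-1 = n" using k by simp
  ultimately have G0: "PL (\<lambda>t. comm (yv (?g t)) (zv c)) n * zv c ^ (2*n') \<in> (Ip p :: 'k fa set)" by simp
  have YZ: "PL (fYZ m is arr) n = (PL (\<lambda>t. comm (yv (?g t)) (zv c)) n :: 'k fa)"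
    by (rule PL_cong) (simp add: fYZ_def assms(5) assms(1) less_trans[OF _ assms(1)])
  have ZZ: "PL (fZZ n arr) n' = (PL (\<lambda>t. jord (zv c) (zv c)) n' :: 'k fa)"
  proof (rule PL_cong)
    fix t assume t: "t < n'"
    have "arr ! (n + 2 * t) = c" using assms(5)[of "n+2*t"] t n' by simp
    moreover have "arr ! Suc (n + 2 * t) = c" using assms(5)[of "n+2*t+1"] t n' by simp
    ultimately show "fZZ n arr t = (jord (zv c) (zv c) :: 'k fa)" by (simp add: fZZ_def)
  qed
  let ?Z = "zv c ^ (2*n') :: 'k fa"
  have eq: "hpoly m n r is arr = PL (fY is) m * (PL (\<lambda>t. comm (yv (?g t)) (zv c)) n * ?Z) * (const (2^n') * prod_list (map (fZZ n arr) [n'..<r]))"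
  proof -
    have "hpoly m n r is arr = PL (fY is) m * PL (\<lambda>t. comm (yv (?g t)) (zv c)) n * (const (2^n') * ?Z * prod_list (map (fZZ n arr) [n'..<r]))"
      unfolding hpoly_blocks PL_split[OF n'r, of "fZZ n arr"] YZ ZZ PL_jord_same ..
    also have "const (2^n') * ?Z = ?Z * const (2^n')" by (rule const_comm)
    finally show ?thesis by (simp only: mult.assoc)
  qed
  show ?thesis unfolding eq by (rule Ip_rmult, rule Ip_lmult, rule G0)
qed

lemma A3:
  assumes "n < p" "even n" "odd p" "p + 1 \<le> n + 2*r" "\<And>t. t \<le> n \<Longrightarrow> arr ! t = c"
    "\<And>t. t < p - 1 - n \<Longrightarrow> arr ! (n+2+t) = c"
  shows "hpoly m n r is arr \<in> (Ip p :: 'k::field fa set)"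
proof -
  obtain q where q: "n = 2*q" using assms(2) by (auto elim: evenE)
  define k where "k = q + 1"
  have k: "n = 2*k - 2" "k \<ge> 1" using q k_def by auto
  define n' where "n' = (p - 1 - n) div 2"
  have n': "2*n' = p - 1 - n" using assms(1,2,3) unfolding n'_def by (auto elim!: oddE evenE)
  have n'r: "Suc n' \<le> r" using n' assms(1,4) by arith
  define e where "e = arr ! Suc n"
  let ?g = "\<lambda>t. is ! (2*m+t)"
  have "PL (\<lambda>t. comm (yv (?g t)) (zv c)) (2*k-2) * jord (zv e) (zv c) * zv c ^ (2*n') \<in> (Ip p :: 'k fa set)"
    by (rule G8) (use k n' assms(1) in auto)
  moreover have "2*k-2 = n" using k by simp
  ultimately have G0: "PL (\<lambda>t. comm (yv (?g t)) (zv c)) n * jord (zv c) (zv e) * zv c ^ (2*n') \<in> (Ip p :: 'k fa set)"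
    by (simp add: jord_swap)
  have YZ: "PL (fYZ m is arr) n = (PL (\<lambda>t. comm (yv (?g t)) (zv c)) n :: 'k fa)"
    by (rule PL_cong) (simp add: fYZ_def assms(5))
  have Z0: "fZZ n arr 0 = (jord (zv c) (zv e) :: 'k fa)" by (simp add: fZZ_def assms(5) e_def)
  have ZZ: "PL (\<lambda>t. fZZ n arr (Suc t)) n' = (PL (\<lambda>t. jord (zv c) (zv c)) n' :: 'k fa)"
  proof (rule PL_cong)
    fix t assume t: "t < n'"
    have "arr ! (n + 2 * Suc t) = c" using assms(6)[of "2*t"] t n' by (simp add: algebra_simps)
    moreover have "arr ! Suc (n + 2 * Suc t) = c" using assms(6)[of "2*t+1"] t n' by (simp add: algebra_simps)
    ultimately show "fZZ n arr (Suc t) = (jord (zv c) (zv c) :: 'k fa)" by (simp add: fZZ_def)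
  qed
  let ?Z = "zv c ^ (2*n') :: 'k fa"
  have eq: "hpoly m n r is arr = PL (fY is) m * (PL (\<lambda>t. comm (yv (?g t)) (zv c)) n * jord (zv c) (zv e) * ?Z) * (const (2^n') * prod_list (map (fZZ n arr) [Suc n'..<r]))"
  proof -
    have "hpoly m n r is arr = PL (fY is) m * PL (\<lambda>t. comm (yv (?g t)) (zv c)) n * ((jord (zv c) (zv e) * (const (2^n') * ?Z)) * prod_list (map (fZZ n arr) [Suc n'..<r]))"
      unfolding hpoly_blocks PL_split[OF n'r, of "fZZ n arr"] YZ PL_Suc_first[of "fZZ n arr" n'] Z0 ZZ PL_jord_same ..
    also have "const (2^n') * ?Z = ?Z * const (2^n')" by (rule const_comm)
    finally show ?thesis by (simp only: mult.assoc)
  qed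
  show ?thesis unfolding eq by (rule Ip_rmult, rule Ip_lmult, rule G0)
qed


lemma js_swap_prop: "swap_prop p 1 (n+2*r) (\<lambda>js. hpoly m n r is js :: 'k::field fa)"
  unfolding swap_prop_def using js_swap by blast

lemma is_swap_prop: "swap_prop p (-1) (2*m+n) (\<lambda>is. hpoly m n r is js :: 'k::field fa)"
  unfolding swap_prop_def using is_swap by blast

lemma js_sort: "length js = n+2*r \<Longrightarrow> cg p (hpoly m n r is js) (hpoly m n r is (sort js) :: 'k::field fa)"
proof -
  assume l: "length js = n+2*r"
  have "swap_prop p 1 (n+2*r) (\<lambda>js. hpoly m n r is js :: 'k fa)" by (rule js_swap_prop)
  then show ?thesis using sort_lemma[of "1::'k" p "n+2*r" "\<lambda>js. hpoly m n r is js" js] l by auto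
qed

lemma js_perm: assumes "mset js' = mset js" "length js = n+2*r"
  shows "cg p (hpoly m n r is js) (hpoly m n r is js' :: 'k::field fa)"
proof -
  have l: "length js' = n+2*r" using assms by (metis size_mset)
  have s: "sort js' = sort js" using assms(1) by (metis properties_for_sort sorted_sort mset_sort)
  show ?thesis using js_sort[OF assms(2), of p m "is"] js_sort[OF l, of p m "is"] unfolding s
    by (meson cg_sym cg_trans)
qed

lemma mset_split_c: "mset js = mset (replicate (count_list js c) c @ filter (\<lambda>x. x \<noteq> c) js)"
proof -
  have "mset js = {#x \<in># mset js. x = c#} + {#x \<in># mset js. x \<noteq> c#}" by (rule multiset_partition)
  also have "{#x \<in># mset js. x = c#} = replicate_mset (count_list js c) c"
    by (simp add: filter_eq_replicate_mset count_mset)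
  finally show ?thesis by simp
qed

lemma high_deg:
  assumes p: "odd p" and li: "length is = 2*m+n" and lj: "length js = n+2*r" and N: "p \<le> count_list js c"
  shows "hpoly m n r is js \<in> (Ip p :: 'k::field fa set)"
proof -
  define N where "N = count_list js c"
  define rest where "rest = filter (\<lambda>x. x \<noteq> c) js"
  have ms: "mset js = mset (replicate N c @ rest)" unfolding N_def rest_def by (rule mset_split_c)
  have lr: "N + length rest = n + 2*r" using arg_cong[OF ms, of size] lj by simp
  have Np: "p \<le> N" using N N_def by simp
  have key: "\<exists>arr. mset arr = mset js \<and> hpoly m n r is arr \<in> (Ip p :: 'k fa set)"
  proof (cases "p \<le> n")
    case True
    let ?arr = "replicate N c @ rest"
    have "hpoly m n r is ?arr \<in> (Ip p :: 'k fa set)"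
      by (rule A1[OF True p]) (use Np in \<open>simp add: nth_append\<close>)
    then show ?thesis using ms by metis
  next
    case False
    then have np: "n < p" by simp
    show ?thesis
    proof (cases "odd n")
      case True
      let ?arr = "replicate N c @ rest"
      have "hpoly m n r is ?arr \<in> (Ip p :: 'k fa set)"
        by (rule A2[OF np True p]) (use Np lr in \<open>auto simp add: nth_append\<close>)
      then show ?thesis using ms by metis
    next
      case False
      then have ev: "even n" by simp
      show ?thesis
      proof (cases "odd (N - n)")
        case True
        have "rest \<noteq> []"
        proof
          assume "rest = []"
          then have "N = n + 2*r" using lr by simp
          then show False using True by simp
        qed
        then obtain e rest' where er: "rest = e # rest'" by (cases rest) auto
        let ?arr = "replicate (Suc n) c @ e # replicate (N - Suc n) c @ rest'"
        have Nn: "Suc n \<le> N" using np Np by simp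
        have m1: "mset ?arr = mset (replicate N c @ rest)"
        proof -
          have "replicate (Suc n) c @ replicate (N - Suc n) c = replicate N c"
          proof -
            have "Suc n + (N - Suc n) = N" using Nn by simp
            then show ?thesis by (metis replicate_add)
          qed
          then have "mset (replicate (Suc n) c) + mset (replicate (N - Suc n) c) = mset (replicate N c)"
            by (metis mset_append)
          then show ?thesis using er by (simp add: ac_simps del: mset_replicate)
        qed
        have "hpoly m n r is ?arr \<in> (Ip p :: 'k fa set)"
        proof (rule A3[OF np ev p])
          show "p + 1 \<le> n + 2*r" using lr er Np by simp
          show "?arr ! t = c" if "t \<le> n" for t using that by (simp add: nth_append del: replicate_Suc)
          show "?arr ! (n + 2 + t) = c" if "t < p - 1 - n" for t
          proof -
            have "t < N - Suc n" using that Np np by simp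
            moreover have "?arr ! (n + 2 + t) = (replicate (N - Suc n) c @ rest') ! t"
              by (simp add: nth_append)
            ultimately show ?thesis by (simp add: nth_append)
          qed
        qed
        then show ?thesis using ms m1 by metis
      next
        case False
        have Np1: "p + 1 \<le> N"
        proof -
          have "N \<noteq> p" using False p ev np by auto
          then show ?thesis using Np by simp
        qed
        let ?arr = "replicate N c @ rest"
        have "hpoly m n r is ?arr \<in> (Ip p :: 'k fa set)"
        proof (rule A3[OF np ev p])
          show "p + 1 \<le> n + 2*r" using lr Np1 by simp
          show "?arr ! t = c" if "t \<le> n" for t using that Np1 np by (simp add: nth_append)
          show "?arr ! (n + 2 + t) = c" if "t < p - 1 - n" for t
          proof -
            have "n + 2 + t < N" using that Np1 np by arith
            then show ?thesis by (simp add: nth_append)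
          qed
        qed
        then show ?thesis using ms by metis
      qed
    qed
  qed
  then obtain arr where arr: "mset arr = mset js" "hpoly m n r is arr \<in> (Ip p :: 'k fa set)" by blast
  show ?thesis using cg_Ip[OF js_perm[OF arr(1) lj] arr(2)] .
qed


definition Db :: "var \<Rightarrow> nat \<Rightarrow> 'k::field fa \<Rightarrow> bool" where
  "Db v d f \<longleftrightarrow> (\<forall>w\<in>Poly_Mapping.keys f. count_list (letters w) v \<le> d)"

lemma Db_mono: "Db v a f \<Longrightarrow> a \<le> b \<Longrightarrow> Db v b f"
  unfolding Db_def by force

lemma keys_uminus': "Poly_Mapping.keys (- f) = Poly_Mapping.keys (f :: 'k::field fa)"
  by (auto simp: in_keys_iff)

lemma Db_add: "Db v a f \<Longrightarrow> Db v a g \<Longrightarrow> Db v a (f + g)"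
  unfolding Db_def using keys_add[of f g] by blast
lemma Db_uminus: "Db v a f \<Longrightarrow> Db v a (- f)"
  unfolding Db_def keys_uminus' .
lemma Db_diff: "Db v a f \<Longrightarrow> Db v a g \<Longrightarrow> Db v a (f - g)"
  using Db_add[of v a f "-g"] Db_uminus[of v a g] by simp
lemma Db_mult: "Db v a f \<Longrightarrow> Db v b g \<Longrightarrow> Db v (a + b) (f * g)"
  unfolding Db_def using keys_mult[of f g] by (fastforce intro: add_mono)
lemma Db_one: "Db v 0 (1 :: 'k::field fa)"
  by (simp add: Db_def)
lemma Db_var: "Db v (if u = v then 1 else 0) (var u :: 'k::field fa)"
  by (simp add: Db_def keys_var)
lemma Db_comm: "Db v a f \<Longrightarrow> Db v b g \<Longrightarrow> Db v (a + b) (comm f g)"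
  unfolding comm_def
  by (rule Db_diff, rule Db_mult, assumption+, subst add.commute, rule Db_mult, assumption+)
lemma Db_jord: "Db v a f \<Longrightarrow> Db v b g \<Longrightarrow> Db v (a + b) (jord f g)"
  unfolding jord_def
  by (rule Db_add, rule Db_mult, assumption+, subst add.commute, rule Db_mult, assumption+)

lemma Db_PL: "(\<And>t. t < m \<Longrightarrow> Db v (d t) (f t)) \<Longrightarrow> Db v (\<Sum>t<m. d t) (PL f m)"
proof (induction m)
  case 0 then show ?case by (simp add: Db_one)
next
  case (Suc m)
  then have "Db v ((\<Sum>t<m. d t) + d m) (PL f m * f m)" by (intro Db_mult) auto
  then show ?case by simp
qed

lemma deg_in_le: "Db v d f \<Longrightarrow> deg_in v f \<le> d"
  unfolding deg_in_def Db_def by (auto intro!: Max.boundedI)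

definition ind :: "nat \<Rightarrow> nat \<Rightarrow> nat" where "ind c x = (if x = c then 1 else 0)"

lemma Db_zv: "Db (Zv c) (ind c x) (zv x :: 'k::field fa)"
  using Db_var[of "Zv c" "Zv x"] by (simp add: ind_def)
lemma Db_yv: "Db (Zv c) 0 (yv x :: 'k::field fa)"
  using Db_var[of "Zv c" "Yv x"] by simp

lemma Db_yy: "Db (Zv c) 0 (comm (yv a) (yv b) :: 'k::field fa)"
  using Db_comm[OF Db_yv[of c a] Db_yv[of c b]] by simp
lemma Db_yz: "Db (Zv c) (ind c b) (comm (yv a) (zv b) :: 'k::field fa)"
  using Db_comm[OF Db_yv[of c a] Db_zv[of c b]] by simp
lemma Db_zz: "Db (Zv c) (ind c a + ind c b) (jord (zv a) (zv b) :: 'k::field fa)"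
  by (rule Db_jord[OF Db_zv Db_zv])

lemma Db_hpoly: "Db (Zv c) ((\<Sum>t<n. ind c (js ! t)) + (\<Sum>t<r. ind c (js ! (n+2*t)) + ind c (js ! (n+2*t+1))))
    (hpoly m n r is js :: 'k::field fa)"
proof -
  have A: "Db (Zv c) (\<Sum>t<m. 0) (PL (fY is) m :: 'k fa)"
    by (rule Db_PL) (unfold fY_def, rule Db_yy)
  have B: "Db (Zv c) (\<Sum>t<n. ind c (js ! t)) (PL (fYZ m is js) n :: 'k fa)"
    by (rule Db_PL) (unfold fYZ_def, rule Db_yz)
  have C: "Db (Zv c) (\<Sum>t<r. ind c (js ! (n+2*t)) + ind c (js ! (n+2*t+1))) (PL (fZZ n js) r :: 'k fa)"
    by (rule Db_PL) (unfold fZZ_def, rule Db_zz)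
  show ?thesis unfolding hpoly_blocks using Db_mult[OF Db_mult[OF A B] C] by simp
qed

lemma count_list_sum: "count_list xs c = (\<Sum>t<length xs. ind c (xs ! t))"
proof (induction xs)
  case Nil then show ?case by simp
next
  case (Cons x xs)
  have "(\<Sum>t<length (x#xs). ind c ((x#xs)!t)) = ind c x + (\<Sum>t<length xs. ind c (xs!t))"
    by (simp only: length_Cons sum.lessThan_Suc_shift nth_Cons_0 nth_Cons_Suc)
  then show ?case using Cons by (simp add: ind_def)
qed

lemma sum_pairs: "(\<Sum>t<n+2*r. g t) = (\<Sum>t<n. g t) + (\<Sum>t<r. g (n+2*t) + g (n+2*t+1::nat)) "
  by (induction r) (simp_all add: algebra_simps)

lemma deg_hpoly_lt:
  assumes "length js = n+2*r" "count_list js c < p"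
  shows "deg_in (Zv c) (hpoly m n r is js :: 'k::field fa) < p"
proof -
  have "deg_in (Zv c) (hpoly m n r is js :: 'k fa) \<le> count_list js c"
    using deg_in_le[OF Db_hpoly]
    unfolding count_list_sum assms(1) sum_pairs by simp
  then show ?thesis using assms(2) by simp
qed


inductive_set spanI :: "nat \<Rightarrow> 'k::field fa set \<Rightarrow> 'k fa set" for p S where
  sI_Ip: "f \<in> Ip p \<Longrightarrow> f \<in> spanI p S"
| sI_gen: "g \<in> S \<Longrightarrow> g \<in> spanI p S"
| sI_add: "f \<in> spanI p S \<Longrightarrow> g \<in> spanI p S \<Longrightarrow> f + g \<in> spanI p S"
| sI_smult: "f \<in> spanI p S \<Longrightarrow> const c * f \<in> spanI p S"

lemma sI_cg: "cg p f g \<Longrightarrow> g \<in> spanI p S \<Longrightarrow> f \<in> spanI p S"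
proof -
  assume "cg p f g" "g \<in> spanI p S"
  then have "(f - g) + g \<in> spanI p S" by (intro sI_add[OF sI_Ip]) (simp_all add: cg_def)
  then show ?thesis by simp
qed

lemma sI_uminus: "f \<in> spanI p S \<Longrightarrow> - f \<in> spanI p S"
  using sI_smult[of f p S "-1"] by (simp add: const_uminus)
lemma sI_diff: "f \<in> spanI p S \<Longrightarrow> g \<in> spanI p S \<Longrightarrow> f - g \<in> spanI p S"
  using sI_add[of f p S "-g"] sI_uminus[of g p S] by simp

lemma sI_rmult:
  assumes "f \<in> spanI p S" "\<And>g. g \<in> S \<Longrightarrow> g * x \<in> spanI p T"
  shows "f * x \<in> spanI p T"
  using assms(1)
proof induction
  case (sI_Ip f) then show ?case by (intro spanI.sI_Ip Ip_rmult)
next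
  case (sI_gen g) then show ?case by (rule assms(2))
next
  case (sI_add f g) then show ?case by (simp add: distrib_right spanI.sI_add)
next
  case (sI_smult f c) then show ?case by (simp add: mult.assoc spanI.sI_smult)
qed

lemma sI_lmult:
  assumes "f \<in> spanI p S" "\<And>g. g \<in> S \<Longrightarrow> x * g \<in> spanI p T"
  shows "x * f \<in> spanI p T"
  using assms(1)
proof induction
  case (sI_Ip f) then show ?case by (intro spanI.sI_Ip Ip_lmult)
next
  case (sI_gen g) then show ?case by (rule assms(2))
next
  case (sI_add f g) then show ?case by (simp add: distrib_left spanI.sI_add)
next
  case (sI_smult f c)
  have "x * (const c * f) = const c * (x * f)" by (metis const_comm mult.assoc)
  then show ?case using sI_smult by (simp add: spanI.sI_smult)
qed

lemma sI_trans: "f \<in> spanI p S \<Longrightarrow> S \<subseteq> spanI p T \<Longrightarrow> f \<in> spanI p T"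
  using sI_rmult[of f p S 1 T] by auto

lemma sI_mono: "f \<in> spanI p S \<Longrightarrow> S \<subseteq> T \<Longrightarrow> f \<in> spanI p T"
  by (erule sI_trans) (auto intro: sI_gen)

lemma sI_explicit:
  "f \<in> spanI p S \<Longrightarrow> \<exists>cs gs. set gs \<subseteq> S \<and> length cs = length gs \<and>
      f - sum_list (map2 (\<lambda>c g. const c * g) cs gs) \<in> Ip p"
proof (induction rule: spanI.induct)
  case (sI_Ip f) then show ?case by (intro exI[of _ "[]"]) auto
next
  case (sI_gen g)
  have "g - sum_list (map2 (\<lambda>c g. const c * g) [1] [g]) = 0" by simp
  then show ?case using sI_gen by (intro exI[of _ "[1]"] exI[of _ "[g]"]) auto
next
  case (sI_add f g)
  then obtain cs gs ds hs where a: "set gs \<subseteq> S" "length cs = length gs"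
      "f - sum_list (map2 (\<lambda>c g. const c * g) cs gs) \<in> Ip p"
    and b: "set hs \<subseteq> S" "length ds = length hs" "g - sum_list (map2 (\<lambda>c g. const c * g) ds hs) \<in> Ip p"
    by blast
  have "map2 (\<lambda>c g. const c * g) (cs @ ds) (gs @ hs) = map2 (\<lambda>c g. const c * g) cs gs @ map2 (\<lambda>c g. const c * g) ds hs"
    using a(2) by simp
  then have eq: "f + g - sum_list (map2 (\<lambda>c g. const c * g) (cs @ ds) (gs @ hs))
     = (f - sum_list (map2 (\<lambda>c g. const c * g) cs gs)) + (g - sum_list (map2 (\<lambda>c g. const c * g) ds hs))"
    by simp
  have "f + g - sum_list (map2 (\<lambda>c g. const c * g) (cs @ ds) (gs @ hs)) \<in> Ip p"
    unfolding eq by (rule Ip_add[OF a(3) b(3)])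
  then show ?case using a b by (intro exI[of _ "cs @ ds"] exI[of _ "gs @ hs"]) auto
next
  case (sI_smult f c)
  then obtain cs gs where a: "set gs \<subseteq> S" "length cs = length gs"
      "f - sum_list (map2 (\<lambda>c g. const c * g) cs gs) \<in> Ip p" by blast
  have "sum_list (map2 (\<lambda>c g. const c * g) (map ((*) c) cs) gs) = const c * sum_list (map2 (\<lambda>c g. const c * g) cs gs)"
    using a(2)
  proof (induction cs gs rule: list_induct2)
    case Nil then show ?case by simp
  next
    case (Cons x xs y ys) then show ?case by (simp add: const_mult distrib_left mult.assoc)
  qed
  then have "const c * f - sum_list (map2 (\<lambda>c g. const c * g) (map ((*) c) cs) gs)
      = const c * (f - sum_list (map2 (\<lambda>c g. const c * g) cs gs))" by (simp add: right_diff_distrib)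
  then show ?case using a by (intro exI[of _ "map ((*) c) cs"] exI[of _ gs]) (auto intro: Ip_lmult)
qed

section \<open>Normal form of h\<close>

definition Hset :: "nat \<Rightarrow> 'k::field fa set" where
  "Hset p = {hpoly m n r is js | m n r is js. length is = 2*m + n \<and> length js = n + 2*r \<and>
      sorted_wrt (<) is \<and> sorted js \<and> (\<forall>c. deg_in (Zv c) (hpoly m n r is js :: 'k fa) < p)}"

lemma Hset_I: "length is = 2*m + n \<Longrightarrow> length js = n + 2*r \<Longrightarrow>
      sorted_wrt (<) is \<Longrightarrow> sorted js \<Longrightarrow> (\<forall>c. deg_in (Zv c) (hpoly m n r is js :: 'k fa) < p) \<Longrightarrow>
      hpoly m n r is js \<in> (Hset p :: 'k::field fa set)"
  unfolding Hset_def by blast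

lemma NF:
  assumes p: "odd p" and two: "(2::'k::field) \<noteq> 0"
    and li: "length is = 2*m+n" and lj: "length js = n+2*r"
  shows "hpoly m n r is js \<in> spanI p (Hset p :: 'k fa set)"
proof (cases "\<exists>c. p \<le> count_list js c")
  case True
  then obtain c where "p \<le> count_list js c" by blast
  then show ?thesis using high_deg[OF p li lj] by (intro sI_Ip) auto
next
  case False
  then have cnt: "\<And>c. count_list (sort js) c < p" by (simp add: not_le flip: count_mset)
  have lj': "length (sort js) = n+2*r" using lj by simp
  have c1: "cg p (hpoly m n r is js) (hpoly m n r is (sort js) :: 'k fa)" by (rule js_sort[OF lj])
  have sp: "swap_prop p (-1) (2*m+n) (\<lambda>is. hpoly m n r is (sort js) :: 'k fa)" by (rule is_swap_prop)
  show ?thesis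
  proof (cases "distinct is")
    case False
    have "hpoly m n r is (sort js) \<in> (Ip p :: 'k fa set)"
      by (rule alt_nondistinct[OF two sp li False])
    then show ?thesis using c1 by (intro sI_Ip) (rule cg_Ip)
  next
    case True
    obtain k where k: "cg p (hpoly m n r is (sort js)) (const ((-1) ^ k) * hpoly m n r (sort is) (sort js) :: 'k fa)"
      using sort_lemma[of "-1::'k" p "2*m+n" _ "is"] sp li by auto
    have "hpoly m n r (sort is) (sort js) \<in> (Hset p :: 'k fa set)"
    proof (rule Hset_I)
      show "\<forall>c. deg_in (Zv c) (hpoly m n r (sort is) (sort js) :: 'k fa) < p"
        using deg_hpoly_lt[OF lj' cnt] by blast
    qed (use li lj' True in \<open>auto simp: strict_sorted_iff\<close>)
    then have "const ((-1) ^ k) * hpoly m n r (sort is) (sort js) \<in> spanI p (Hset p :: 'k fa set)"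
      by (intro sI_smult sI_gen)
    then show ?thesis using cg_trans[OF c1 k] by (rule sI_cg[rotated])
  qed
qed


definition central :: "nat \<Rightarrow> 'k::field fa \<Rightarrow> bool" where
  "central p c \<longleftrightarrow> (\<forall>x. comm c x \<in> Ip p)"

lemma central_mult: "central p c \<Longrightarrow> central p d \<Longrightarrow> central p (c * d)"
proof -
  assume a: "central p c" "central p d"
  have "comm (c * d) x = c * comm d x + comm c x * d" for x by (simp add: comm_def algebra_simps)
  then show ?thesis using a unfolding central_def by (metis Ip_add Ip_lmult Ip_rmult)
qed
lemma central_one: "central p (1 :: 'k::field fa)" by (simp add: central_def comm_def)
lemma central_PL: "(\<And>t. t < m \<Longrightarrow> central p (f t)) \<Longrightarrow> central p (PL f m)"
  by (induction m) (auto simp: central_one central_mult)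
lemma central_cg: "central p c \<Longrightarrow> cg p (x * c) (c * x)"
  unfolding central_def by (rule cg_comm') blast
lemma central_yy: "central p (comm (yv a) (yv b) :: 'k::field fa)"
  unfolding central_def using yy_central by blast
lemma central_jj: "central p (jord (zv a) (zv b) :: 'k::field fa)"
  unfolding central_def using jj_central by blast
lemma central_ZZ: "central p (PL (fZZ n js) r :: 'k::field fa)"
  by (rule central_PL) (simp add: fZZ_def central_jj)

lemma M_yy: "comm (yv a) (yv b) * hpoly m n r is js = (hpoly (Suc m) n r (a # b # is) js :: 'k::field fa)"
proof -
  have Y: "PL (fY (a # b # is)) (Suc m) = comm (yv a) (yv b) * (PL (fY is) m :: 'k fa)"
  proof -
    have "PL (\<lambda>t. fY (a # b # is) (Suc t)) m = (PL (fY is) m :: 'k fa)"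
      by (rule PL_cong) (simp add: fY_def numeral_eq_Suc)
    then show ?thesis unfolding PL_Suc_first[of "fY (a # b # is)"] by (simp add: fY_def)
  qed
  have YZ: "PL (fYZ (Suc m) (a # b # is) js) n = (PL (fYZ m is js) n :: 'k fa)"
    by (rule PL_cong) (simp add: fYZ_def)
  show ?thesis unfolding hpoly_blocks Y YZ by (simp add: mult.assoc)
qed

lemma nth_ins: "n \<le> length js \<Longrightarrow> (take n js @ b # drop n js) ! k =
    (if k < n then js ! k else if k = n then b else js ! (k - 1))"
  by (auto simp: nth_append min_def nth_Cons' not_less)

lemma M_yz:
  assumes li: "length is = 2*m+n" and lj: "length js = n+2*r"
  shows "cg p (hpoly m n r is js * comm (yv a) (zv b))
     (hpoly m (Suc n) r (is @ [a]) (take n js @ b # drop n js) :: 'k::field fa)"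
proof -
  let ?js = "take n js @ b # drop n js" and ?is = "is @ [a]"
  let ?X = "comm (yv a) (zv b) :: 'k fa"
  have nj: "n \<le> length js" using lj by simp
  have Y: "PL (fY ?is) m = (PL (fY is) m :: 'k fa)"
    by (rule PL_cong) (use li in \<open>simp add: fY_def nth_append\<close>)
  have YZ: "PL (fYZ m ?is ?js) (Suc n) = PL (fYZ m is js) n * ?X"
  proof -
    have "PL (fYZ m ?is ?js) n = (PL (fYZ m is js) n :: 'k fa)"
      by (rule PL_cong) (use li lj in \<open>simp add: fYZ_def nth_append nth_ins[OF nj]\<close>)
    moreover have "fYZ m ?is ?js n = ?X" using li nj by (simp add: fYZ_def nth_append min_def)
    ultimately show ?thesis by (simp only: PL_Suc_last)
  qed
  have ZZ: "PL (fZZ (Suc n) ?js) r = (PL (fZZ n js) r :: 'k fa)"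
    by (rule PL_cong) (simp add: fZZ_def nth_ins[OF nj])
  have "hpoly m n r is js * ?X = PL (fY is) m * PL (fYZ m is js) n * (PL (fZZ n js) r * ?X)"
    unfolding hpoly_blocks by (simp add: mult.assoc)
  also have "cg p \<dots> (PL (fY is) m * PL (fYZ m is js) n * (?X * PL (fZZ n js) r))"
    by (rule cg_lmult, rule cg_sym, rule central_cg, rule central_ZZ)
  also have "\<dots> = hpoly m (Suc n) r ?is ?js"
    unfolding hpoly_blocks Y YZ ZZ by (simp add: mult.assoc)
  finally show ?thesis .
qed

lemma M_zz:
  assumes lj: "length js = n+2*r"
  shows "hpoly m n r is js * jord (zv a) (zv b) = (hpoly m n (Suc r) is (js @ [a, b]) :: 'k::field fa)"
proof -
  have YZ: "PL (fYZ m is (js @ [a, b])) n = (PL (fYZ m is js) n :: 'k fa)"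
    by (rule PL_cong) (use lj in \<open>simp add: fYZ_def nth_append\<close>)
  have ZZ: "PL (fZZ n (js @ [a, b])) (Suc r) = PL (fZZ n js) r * (jord (zv a) (zv b) :: 'k fa)"
  proof -
    have "PL (fZZ n (js @ [a, b])) r = (PL (fZZ n js) r :: 'k fa)"
      by (rule PL_cong) (use lj in \<open>simp add: fZZ_def nth_append\<close>)
    moreover have "fZZ n (js @ [a, b]) r = (jord (zv a) (zv b) :: 'k fa)"
      using lj by (simp add: fZZ_def nth_append)
    ultimately show ?thesis by (simp only: PL_Suc_last)
  qed
  show ?thesis unfolding hpoly_blocks YZ ZZ by (simp add: mult.assoc)
qed


definition Gk :: "nat \<Rightarrow> nat set \<Rightarrow> 'k::field fa set" where
  "Gk p A = {h * prod_list (map zv ks) | h ks. h \<in> Hset p \<and> sorted_wrt (<) ks \<and> set ks \<subseteq> A}"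

lemma Gk_sub: "Gk p A \<subseteq> (g_set p :: 'k::field fa set)"
  unfolding Gk_def Hset_def g_set_def by blast

lemma Gk_I: "h \<in> Hset p \<Longrightarrow> sorted_wrt (<) ks \<Longrightarrow> set ks \<subseteq> A \<Longrightarrow> h * prod_list (map zv ks) \<in> (Gk p A :: 'k::field fa set)"
  unfolding Gk_def by blast

lemma g_set_E: "g \<in> g_set p \<Longrightarrow> \<exists>h ks. g = h * prod_list (map zv ks) \<and> h \<in> (Hset p :: 'k::field fa set) \<and> sorted_wrt (<) ks"
  unfolding g_set_def Hset_def by blast

lemma Hset_E: "h \<in> (Hset p :: 'k::field fa set) \<Longrightarrow> \<exists>m n r is js. h = hpoly m n r is js \<and> length is = 2*m+n \<and> length js = n+2*r"
  unfolding Hset_def by blast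

lemma const_pull: "x * (const c * y) = const c * (x * (y :: 'k::field fa))"
proof -
  have "x * const c = const c * x" by (rule const_comm[symmetric])
  then show ?thesis by (metis mult.assoc)
qed

lemma H_Zs: "f \<in> spanI p (Hset p) \<Longrightarrow> sorted_wrt (<) ks \<Longrightarrow> set ks \<subseteq> A \<Longrightarrow>
   f * prod_list (map zv ks) \<in> spanI p (Gk p A :: 'k::field fa set)"
  by (erule sI_rmult) (intro sI_gen Gk_I)

context
  fixes p :: nat
  assumes podd: "odd p" and two: "(2::'k::field) \<noteq> 0"
begin

lemma NF': "length is = 2*m+n \<Longrightarrow> length js = n+2*r \<Longrightarrow> hpoly m n r is js \<in> spanI p (Hset p :: 'k fa set)"
  by (rule NF[OF podd two])

lemma G_yy:
  assumes h: "h \<in> (Hset p :: 'k fa set)" and ks: "sorted_wrt (<) ks"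
  shows "h * prod_list (map zv ks) * comm (yv a) (yv b) \<in> spanI p (g_set p)"
proof -
  obtain m n r "is" js where hh: "h = hpoly m n r is js" "length is = 2*m+n" "length js = n+2*r"
    using Hset_E[OF h] by blast
  let ?X = "comm (yv a) (yv b) :: 'k fa" and ?Z = "prod_list (map zv ks) :: 'k fa"
  have "h * ?Z * ?X = h * (?Z * ?X)" by (simp add: mult.assoc)
  also have "cg p \<dots> (h * (?X * ?Z))" by (rule cg_lmult, rule central_cg, rule central_yy)
  also have "\<dots> = (h * ?X) * ?Z" by (simp add: mult.assoc)
  also have "cg p \<dots> ((?X * h) * ?Z)" by (rule cg_rmult, rule central_cg, rule central_yy)
  also have "\<dots> = hpoly (Suc m) n r (a # b # is) js * ?Z" unfolding hh M_yy ..
  finally have c: "cg p (h * ?Z * ?X) (hpoly (Suc m) n r (a # b # is) js * ?Z)" .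
  have "hpoly (Suc m) n r (a # b # is) js * ?Z \<in> spanI p (Gk p (set ks))"
    by (rule H_Zs[OF NF' ks]) (use hh in auto)
  then have "hpoly (Suc m) n r (a # b # is) js * ?Z \<in> spanI p (g_set p)"
    by (rule sI_mono) (rule Gk_sub)
  then show ?thesis by (rule sI_cg[OF c])
qed

lemma G_yz:
  assumes h: "h \<in> (Hset p :: 'k fa set)" and ks: "sorted_wrt (<) ks"
  shows "h * prod_list (map zv ks) * comm (yv a) (zv b) \<in> spanI p (g_set p)"
proof -
  obtain m n r "is" js where hh: "h = hpoly m n r is js" "length is = 2*m+n" "length js = n+2*r"
    using Hset_E[OF h] by blast
  let ?X = "comm (yv a) (zv b) :: 'k fa" and ?Z = "prod_list (map zv ks) :: 'k fa"
  let ?s = "(-1::'k) ^ length ks"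
  have ss: "?s * ?s = 1" by (simp add: power_mult_distrib[symmetric])
  have a1: "cg p (?X * ?Z) (const ?s * (?Z * ?X))" by (rule yz_zs_anti)
  have a2: "cg p (?Z * ?X) (const ?s * (?X * ?Z))"
  proof -
    have "?Z * ?X = const ?s * (const ?s * (?Z * ?X))"
      using ss by (simp add: mult.assoc[symmetric] const_mult[symmetric])
    also have "cg p \<dots> (const ?s * (?X * ?Z))" by (rule cg_lmult, rule cg_sym, rule a1)
    finally show ?thesis .
  qed
  let ?js = "take n js @ b # drop n js" and ?is = "is @ [a]"
  have "h * ?Z * ?X = h * (?Z * ?X)" by (simp add: mult.assoc)
  also have "cg p \<dots> (h * (const ?s * (?X * ?Z)))" by (rule cg_lmult, rule a2)
  also have "\<dots> = const ?s * ((h * ?X) * ?Z)" by (simp only: const_pull mult.assoc)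
  also have "cg p \<dots> (const ?s * (hpoly m (Suc n) r ?is ?js * ?Z))"
    unfolding hh(1) by (rule cg_lmult, rule cg_rmult, rule M_yz[OF hh(2,3)])
  finally have c: "cg p (h * ?Z * ?X) (const ?s * (hpoly m (Suc n) r ?is ?js * ?Z))" .
  have "hpoly m (Suc n) r ?is ?js * ?Z \<in> spanI p (Gk p (set ks))"
    by (rule H_Zs[OF NF' ks]) (use hh in auto)
  then have "hpoly m (Suc n) r ?is ?js * ?Z \<in> spanI p (g_set p)"
    by (rule sI_mono) (rule Gk_sub)
  then show ?thesis by (intro sI_cg[OF c] sI_smult)
qed

end


lemma Gk_mono: "A \<subseteq> B \<Longrightarrow> Gk p A \<subseteq> (Gk p B :: 'k::field fa set)"
  unfolding Gk_def by blast

lemma Gk_E: "g \<in> (Gk p A :: 'k::field fa set) \<Longrightarrow> \<exists>h ks. g = h * prod_list (map zv ks) \<and> h \<in> Hset p \<and> sorted_wrt (<) ks \<and> set ks \<subseteq> A"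
  unfolding Gk_def by blast

context
  fixes p :: nat
  assumes podd: "odd p" and two: "(2::'k::field) \<noteq> 0"
begin

lemma J_term:
  assumes h: "h \<in> (Hset p :: 'k fa set)" and ks: "sorted_wrt (<) ks" "set ks \<subseteq> A"
  shows "h * prod_list (map zv ks) * jord (zv a) (zv b) \<in> spanI p (Gk p A)"
proof -
  obtain m n r "is" js where hh: "h = hpoly m n r is js" "length is = 2*m+n" "length js = n+2*r"
    using Hset_E[OF h] by blast
  let ?J = "jord (zv a) (zv b) :: 'k fa" and ?Z = "prod_list (map zv ks) :: 'k fa"
  have "h * ?Z * ?J = h * (?Z * ?J)" by (simp add: mult.assoc)
  also have "cg p \<dots> (h * (?J * ?Z))" by (rule cg_lmult, rule central_cg, rule central_jj)
  also have "\<dots> = hpoly m n (Suc r) is (js @ [a, b]) * ?Z"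
    unfolding hh(1) M_zz[OF hh(3), symmetric] by (simp add: mult.assoc)
  finally have c: "cg p (h * ?Z * ?J) (hpoly m n (Suc r) is (js @ [a, b]) * ?Z)" .
  have "hpoly m n (Suc r) is (js @ [a, b]) * ?Z \<in> spanI p (Gk p A)"
    by (rule H_Zs[OF NF'[OF podd two] ks]) (use hh in auto)
  then show ?thesis by (rule sI_cg[OF c])
qed

lemma G_z_gen:
  "sorted_wrt (<) ks \<Longrightarrow> \<forall>h \<in> (Hset p :: 'k fa set). h * prod_list (map zv ks) * zv c \<in> spanI p (Gk p (insert c (set ks)))"
proof (induction ks rule: rev_induct)
  case Nil
  show ?case
  proof
    fix h assume "h \<in> (Hset p :: 'k fa set)"
    then have "h * prod_list (map zv [c]) \<in> (Gk p (insert c (set [])) :: 'k fa set)"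
      by (intro Gk_I) auto
    then show "h * prod_list (map zv []) * zv c \<in> spanI p (Gk p (insert c (set [])))"
      by (simp add: sI_gen)
  qed
next
  case (snoc k ks)
  have sks: "sorted_wrt (<) ks" and lt: "\<And>x. x \<in> set ks \<Longrightarrow> x < k"
    using snoc.prems by (auto simp: sorted_wrt_append)
  let ?A = "insert c (set (ks @ [k]))"
  let ?Z = "prod_list (map zv ks) :: 'k fa"
  show ?case
  proof
    fix h assume h: "h \<in> (Hset p :: 'k fa set)"
    have eqZ: "h * prod_list (map zv (ks @ [k])) * zv c = h * ?Z * (zv k * zv c)" by (simp add: mult.assoc)
    consider "k < c" | "k = c" | "c < k" by linarith
    then show "h * prod_list (map zv (ks @ [k])) * zv c \<in> spanI p (Gk p ?A)"
    proof cases
      case 1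
      have "sorted_wrt (<) (ks @ [k, c])" using snoc.prems 1 lt by (auto simp: sorted_wrt_append intro: less_trans)
      then have "h * prod_list (map zv (ks @ [k, c])) \<in> (Gk p ?A :: 'k fa set)"
        using h by (intro Gk_I) auto
      then show ?thesis by (simp add: mult.assoc sI_gen)
    next
      case 2
      have e: "zv k * zv c = const (1/2) * (jord (zv c) (zv c) :: 'k fa)"
      proof -
        have h2: "(1/2 * 2 :: 'k) = 1" using two by simp
        have "const (1/2) * (jord (zv c) (zv c) :: 'k fa) = const (1/2) * (const 2 * zv c ^ 2)" by (simp only: jord_same)
        also have "\<dots> = const (1/2 * 2) * zv c ^ 2" by (simp only: const_mult mult.assoc)
        also have "\<dots> = zv c * zv c" by (simp only: h2 const_1 mult_1_left power2_eq_square)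
        finally show ?thesis using 2 by simp
      qed
      have "h * ?Z * jord (zv c) (zv c) \<in> spanI p (Gk p ?A)"
        by (rule J_term[OF h sks]) auto
      then have "const (1/2) * (h * ?Z * jord (zv c) (zv c)) \<in> spanI p (Gk p ?A)" by (rule sI_smult)
      moreover have "h * ?Z * (const (1/2) * jord (zv c) (zv c)) = const (1/2) * (h * ?Z * jord (zv c) (zv c))"
        by (simp only: const_pull)
      ultimately show ?thesis unfolding eqZ e by simp
    next
      case 3
      have e: "zv k * zv c = jord (zv c) (zv k) - zv c * (zv k :: 'k fa)" by (simp add: jord_def)
      have t1: "h * ?Z * jord (zv c) (zv k) \<in> spanI p (Gk p ?A)"
        by (rule J_term[OF h sks]) auto
      have ih: "h * ?Z * zv c \<in> spanI p (Gk p (insert c (set ks)))" using snoc.IH sks h by blast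
      have t2: "h * ?Z * zv c * zv k \<in> spanI p (Gk p ?A)"
      proof (rule sI_rmult[OF ih])
        fix g assume "g \<in> (Gk p (insert c (set ks)) :: 'k fa set)"
        then obtain h' ks' where g: "g = h' * prod_list (map zv ks')" "h' \<in> Hset p" "sorted_wrt (<) ks'"
          "set ks' \<subseteq> insert c (set ks)" using Gk_E by blast
        have "sorted_wrt (<) (ks' @ [k])" using g(3,4) lt 3 by (auto simp: sorted_wrt_append)
        then have "h' * prod_list (map zv (ks' @ [k])) \<in> (Gk p ?A :: 'k fa set)"
          using g by (intro Gk_I) auto
        then show "g * zv k \<in> spanI p (Gk p ?A)" unfolding g(1) by (simp add: mult.assoc sI_gen)
      qed
      have "h * ?Z * (zv k * zv c) = h * ?Z * jord (zv c) (zv k) - h * ?Z * zv c * zv k"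
        unfolding e by (simp add: right_diff_distrib mult.assoc)
      then show ?thesis unfolding eqZ using t1 t2 by (simp add: sI_diff)
    qed
  qed
qed

lemma G_z:
  assumes h: "h \<in> (Hset p :: 'k fa set)" and ks: "sorted_wrt (<) ks"
  shows "h * prod_list (map zv ks) * zv c \<in> spanI p (g_set p)"
proof -
  have "h * prod_list (map zv ks) * zv c \<in> spanI p (Gk p (insert c (set ks)))" using G_z_gen[OF ks] h by blast
  then show ?thesis by (rule sI_mono) (rule Gk_sub)
qed

end


definition Atoms :: "'k::field fa set" where
  "Atoms = {zv c | c. True} \<union> {comm (yv a) (yv b) | a b. True} \<union> {comm (yv a) (zv b) | a b. True}"

definition Prods :: "'k::field fa set" where
  "Prods = {prod_list xs | xs. set xs \<subseteq> Atoms}"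

lemma Prods_I: "set xs \<subseteq> Atoms \<Longrightarrow> prod_list xs \<in> Prods" unfolding Prods_def by blast
lemma Prods_E: "u \<in> Prods \<Longrightarrow> \<exists>xs. u = prod_list xs \<and> set xs \<subseteq> Atoms" unfolding Prods_def by blast

lemma Prods_mult': "u \<in> Prods \<Longrightarrow> v \<in> Prods \<Longrightarrow> u * v \<in> (Prods :: 'k::field fa set)"
proof -
  assume "u \<in> Prods" "v \<in> Prods"
  then obtain xs ys where "u = prod_list xs" "set xs \<subseteq> Atoms" "v = prod_list ys" "set ys \<subseteq> Atoms"
    using Prods_E by metis
  then show ?thesis using Prods_I[of "xs @ ys"] by simp
qed

lemma atom_Prods: "x \<in> Atoms \<Longrightarrow> x \<in> Prods"
  using Prods_I[of "[x]"] by simp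

lemma Prods_mult: "f \<in> spanI p Prods \<Longrightarrow> g \<in> spanI p Prods \<Longrightarrow> f * g \<in> spanI p (Prods :: 'k::field fa set)"
  by (erule sI_rmult, erule sI_lmult, rule sI_gen, rule Prods_mult')

lemma comm_y_Prods: "set xs \<subseteq> Atoms \<Longrightarrow> comm (prod_list xs) (yv b) \<in> spanI p (Prods :: 'k::field fa set)"
proof (induction xs)
  case Nil then show ?case by (simp add: comm_def sI_Ip)
next
  case (Cons x xs)
  have id: "comm (prod_list (x # xs)) (yv b) = x * comm (prod_list xs) (yv b) + comm x (yv b) * prod_list xs"
    by (simp add: comm_def algebra_simps)
  have P: "prod_list xs \<in> (Prods :: 'k fa set)" using Cons.prems by (intro Prods_I) auto
  have t1: "x * comm (prod_list xs) (yv b) \<in> spanI p Prods"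
  proof (rule sI_lmult)
    show "comm (prod_list xs) (yv b) \<in> spanI p Prods" using Cons by auto
    fix v assume v: "v \<in> (Prods :: 'k fa set)"
    have xa: "x \<in> Atoms" using Cons.prems by auto
    show "x * v \<in> spanI p Prods" by (intro sI_gen Prods_mult'[OF atom_Prods[OF xa] v])
  qed
  have t2: "comm x (yv b) \<in> spanI p Prods"
  proof -
    have "x \<in> Atoms" using Cons.prems by auto
    then consider c where "x = zv c" | a c where "x = comm (yv a) (yv c)" | a c where "x = comm (yv a) (zv c)"
      unfolding Atoms_def by blast
    then show ?thesis
    proof cases
      case 1
      have "comm (yv b) (zv c) \<in> (Prods :: 'k fa set)" by (rule atom_Prods) (auto simp: Atoms_def)
      then have "const (-1) * comm (yv b) (zv c) \<in> spanI p (Prods :: 'k fa set)" by (intro sI_smult sI_gen)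
      then show ?thesis using 1 by (simp add: const_uminus comm_swap[of "zv c"])
    next
      case 2
      have "comm (comm (yv a) (yv c)) (yv b) \<in> (Ip p :: 'k fa set)" by (rule yy_central)
      then show ?thesis using 2 by (simp add: sI_Ip)
    next
      case 3
      have "comm (comm (yv a) (zv c)) (yv b) \<in> (Ip p :: 'k fa set)" by (rule G2)
      then show ?thesis using 3 by (simp add: sI_Ip)
    qed
  qed
  have t3: "comm x (yv b) * prod_list xs \<in> spanI p Prods"
    by (rule sI_rmult[OF t2]) (intro sI_gen Prods_mult' P)
  show ?case unfolding id by (rule sI_add[OF t1 t3])
qed

lemma comm_var_Prods: "f \<in> spanI p Prods \<Longrightarrow> comm f (var v) \<in> spanI p (Prods :: 'k::field fa set)"
proof (induction rule: spanI.induct)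
  case (sI_Ip f) then show ?case by (intro spanI.sI_Ip) (simp add: comm_def Ip_diff Ip_lmult Ip_rmult)
next
  case (sI_gen u)
  then obtain xs where u: "u = prod_list xs" "set xs \<subseteq> Atoms" using Prods_E by blast
  show ?case
  proof (cases v)
    case (Yv b) then show ?thesis using comm_y_Prods[OF u(2)] u(1) by simp
  next
    case (Zv c)
    have a: "zv c \<in> (Atoms :: 'k fa set)" by (auto simp: Atoms_def)
    have "u * zv c \<in> (Prods :: 'k fa set)" "zv c * u \<in> (Prods :: 'k fa set)"
      using Prods_mult'[OF sI_gen(1) atom_Prods[OF a]] Prods_mult'[OF atom_Prods[OF a] sI_gen(1)] by auto
    then have "u * zv c - zv c * u \<in> spanI p (Prods :: 'k fa set)" by (rule sI_diff[OF spanI.sI_gen spanI.sI_gen])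
    then show ?thesis using Zv by (simp add: comm_def)
  qed
next
  case (sI_add f g) then show ?case by (simp add: comm_def algebra_simps) (metis add_diff_eq diff_diff_eq2 spanI.sI_add diff_add_eq)
next
  case (sI_smult f c)
  have "comm (const c * f) (var v) = const c * comm f (var v)"
  proof -
    have "var v * const c = const c * (var v :: 'k fa)" by (rule const_comm[symmetric])
    then show ?thesis by (simp add: comm_def right_diff_distrib mult.assoc) (metis mult.assoc)
  qed
  then show ?case using sI_smult by (simp add: spanI.sI_smult)
qed

lemma comm_vars_Prods: "comm (var x) (var y) \<in> spanI p (Prods :: 'k::field fa set)"
proof (cases x)
  case (Yv a)
  show ?thesis
  proof (cases y)
    case (Yv b)
    then show ?thesis using \<open>x = Yv a\<close> by (intro sI_gen atom_Prods) (auto simp: Atoms_def)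
  next
    case (Zv b)
    then show ?thesis using \<open>x = Yv a\<close> by (intro sI_gen atom_Prods) (auto simp: Atoms_def)
  qed
next
  case (Zv a)
  show ?thesis
  proof (cases y)
    case (Yv b)
    have "const (-1) * comm (yv b) (zv a) \<in> spanI p (Prods :: 'k fa set)"
      by (intro sI_smult sI_gen atom_Prods) (auto simp: Atoms_def)
    then show ?thesis using \<open>x = Zv a\<close> Yv by (simp add: const_uminus comm_swap[of "zv a"])
  next
    case (Zv b)
    have a: "zv a \<in> (Atoms :: 'k fa set)" "zv b \<in> (Atoms :: 'k fa set)" by (auto simp: Atoms_def)
    have "zv a * zv b \<in> (Prods :: 'k fa set)" "zv b * zv a \<in> (Prods :: 'k fa set)"
      using Prods_mult'[OF atom_Prods[OF a(1)] atom_Prods[OF a(2)]] Prods_mult'[OF atom_Prods[OF a(2)] atom_Prods[OF a(1)]] by auto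
    then have "zv a * zv b - zv b * zv a \<in> spanI p (Prods :: 'k fa set)" by (rule sI_diff[OF sI_gen sI_gen])
    then show ?thesis using \<open>x = Zv a\<close> Zv by (simp add: comm_def)
  qed
qed

lemma foldl_Prods: "f \<in> spanI p Prods \<Longrightarrow> foldl comm f (map var ys) \<in> spanI p (Prods :: 'k::field fa set)"
  by (induction ys arbitrary: f) (auto intro: comm_var_Prods)

lemma Yp_Prods: "f \<in> Y_proper \<Longrightarrow> f \<in> spanI p (Prods :: 'k::field fa set)"
proof (induction rule: Y_proper.induct)
  case (const c)
  have "const c * prod_list [] \<in> spanI p (Prods :: 'k fa set)" by (intro sI_smult sI_gen Prods_I) auto
  then show ?case by simp
next
  case (zvar i)
  then show ?case by (intro sI_gen atom_Prods) (auto simp: Atoms_def)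
next
  case (commutator xs x)
  then obtain y ys where "xs = y # ys" by (cases xs) auto
  then show ?case unfolding lcomm_def using foldl_Prods[OF comm_vars_Prods[where p=p and x=x and y=y]] by simp
next
  case (add f g) show ?case by (rule sI_add[OF add.IH])
next
  case (mult f g) show ?case by (rule Prods_mult[OF mult.IH])
qed

context
  fixes p :: nat
  assumes podd: "odd p" and two: "(2::'k::field) \<noteq> 0"
begin

lemma one_g: "(1 :: 'k fa) \<in> g_set p"
proof -
  have "hpoly 0 0 0 [] [] \<in> (Hset p :: 'k fa set)"
  proof (rule Hset_I)
    show "\<forall>c. deg_in (Zv c) (hpoly 0 0 0 [] [] :: 'k fa) < p"
      using deg_hpoly_lt[of "[]" 0 0 _ p] podd by (auto elim: oddE)
  qed auto
  then have "hpoly 0 0 0 [] [] * prod_list (map zv []) \<in> (Gk p {} :: 'k fa set)" by (intro Gk_I) auto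
  then show ?thesis using Gk_sub by (force simp: hpoly_def)
qed

lemma W_atom: "f \<in> spanI p (g_set p) \<Longrightarrow> x \<in> (Atoms :: 'k fa set) \<Longrightarrow> f * x \<in> spanI p (g_set p)"
proof (erule sI_rmult)
  fix g assume x: "x \<in> Atoms" and g: "g \<in> (g_set p :: 'k fa set)"
  then obtain h ks where hk: "g = h * prod_list (map zv ks)" "h \<in> Hset p" "sorted_wrt (<) ks"
    using g_set_E by blast
  from x consider c where "x = zv c" | a c where "x = comm (yv a) (yv c)" | a c where "x = comm (yv a) (zv c)"
    unfolding Atoms_def by blast
  then show "g * x \<in> spanI p (g_set p)"
  proof cases
    case 1 then show ?thesis using G_z[OF podd two hk(2,3)] hk(1) by simp
  next
    case 2 then show ?thesis using G_yy[OF podd two hk(2,3)] hk(1) by simp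
  next
    case 3 then show ?thesis using G_yz[OF podd two hk(2,3)] hk(1) by simp
  qed
qed

lemma Prods_g: "set xs \<subseteq> Atoms \<Longrightarrow> prod_list xs \<in> spanI p (g_set p :: 'k fa set)"
proof (induction xs rule: rev_induct)
  case Nil then show ?case using one_g by (simp add: sI_gen)
next
  case (snoc x xs) then show ?case using W_atom by simp
qed

lemma Yp_g: "f \<in> Y_proper \<Longrightarrow> f \<in> spanI p (g_set p :: 'k fa set)"
  by (rule sI_trans[OF Yp_Prods]) (auto dest!: Prods_E intro: Prods_g)

end


theorem mainTheorem9:
  fixes p :: nat
  assumes "infinite (UNIV :: 'k::field set)"
    and "CHAR('k) = p" and "p > 2"
    and "(f :: 'k fa) \<in> Y_proper"
  shows "\<exists>cs gs. set gs \<subseteq> g_set p \<and> length cs = length gs \<and>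
           f - sum_list (map2 (\<lambda>c g. const c * g) cs gs) \<in> Ip p"
proof -
  have "prime CHAR('k)" by (rule prime_CHAR_semidom) (use assms(2,3) in simp)
  then have "prime p" using assms(2) by simp
  then have podd: "odd p" using prime_odd_nat assms(3) by blast
  have two: "(2::'k) \<noteq> 0"
  proof
    assume "(2::'k) = 0"
    then have "of_nat 2 = (0::'k)" by simp
    then have "CHAR('k) dvd 2" by (simp only: of_nat_eq_0_iff_char_dvd)
    then show False using assms(2,3) by (auto dest: dvd_imp_le)
  qed
  have "f \<in> spanI p (g_set p)" by (rule Yp_g[OF podd two assms(4)])
  then show ?thesis by (rule sI_explicit)
qed


end
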